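(* Let $0<a<b<\infty$, $0<c<d<\infty$, $p,q>-1$ and $\alpha,\beta>0$. Suppose that $f:[a,b]\times[c,d]\to\mathbb{R}$ is continuous and of bounded variation in the sense of Arzelà. Then $$\dim_B\Big(G\big({}^{(p,q)}_{(a,c)}\mathfrak{I}^{(\alpha,\beta)}f\big)\Big)=\dim_H\Big(G\big({}^{(p,q)}_{(a,c)}\mathfrak{I}^{(\alpha,\beta)}f\big)\Big)=2.$$
   Context: For $f:[a,b]\times[c,d]\to\mathbb{R}$ with $0<a<b$, $0<c<d$, real $\alpha,\beta>0$ and $(p,q)\neq(-1,-1)$, the mixed Katugampola fractional integral is $$\big({}^{(p,q)}_{(a,c)}\mathfrak{I}^{(\alpha,\beta)}f\big)(x,y)=\frac{(p+1)^{1-\alpha}(q+1)^{1-\beta}}{\Gamma(\alpha)\Gamma(\beta)}\int_a^x\int_c^y (x^{p+1}-s^{p+1})^{\alpha-1}(y^{q+1}-t^{q+1})^{\beta-1}s^{p}t^{q}f(s,t)\,\mathrm{d}t\,\mathrm{d}s.$$ The graph of $g:[a,b]\times[c,d]\to\mathbb{R}$ is $G(g)=\{(x,y,g(x,y))\}\subset\mathbb{R}^3$; $\dim_H$, $\dim_B$ are Hausdorff and box dimension. Bounded variation in the sense of Arzelà: there is $K$ such that for all $m$ and all $a=x_0\le\dots\le x_m=b$, $c=y_0\le\dots\le y_m=d$, $\sum_{i=0}^{m-1}|f(x_{i+1},y_{i+1})-f(x_i,y_i)|\le K$. *)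

theory Defs
  imports "HOL-Analysis.Analysis"
begin

definition katugampola_int ::
  "real \<Rightarrow> real \<Rightarrow> real \<Rightarrow> real \<Rightarrow> real \<Rightarrow> real \<Rightarrow> (real \<Rightarrow> real \<Rightarrow> real) \<Rightarrow> real \<Rightarrow> real \<Rightarrow> real"
  where
  "katugampola_int p q a c \<alpha> \<beta> f x y =
     ((p + 1) powr (1 - \<alpha>) * (q + 1) powr (1 - \<beta>) / (Gamma \<alpha> * Gamma \<beta>)) *
     integral {a..x} (\<lambda>s. integral {c..y} (\<lambda>t.
        (x powr (p + 1) - s powr (p + 1)) powr (\<alpha> - 1) *
        (y powr (q + 1) - t powr (q + 1)) powr (\<beta> - 1) *
        s powr p * t powr q * f s t))"

definition graph2 :: "real \<Rightarrow> real \<Rightarrow> real \<Rightarrow> real \<Rightarrow> (real \<Rightarrow> real \<Rightarrow> real) \<Rightarrow> (real \<times> real \<times> real) set"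
  where "graph2 a b c d g = {(x, y, g x y) | x y. x \<in> {a..b} \<and> y \<in> {c..d}}"

definition arzela_bv :: "real \<Rightarrow> real \<Rightarrow> real \<Rightarrow> real \<Rightarrow> (real \<Rightarrow> real \<Rightarrow> real) \<Rightarrow> bool"
  where "arzela_bv a b c d f \<longleftrightarrow> (\<exists>K. \<forall>(m::nat) (xs::nat \<Rightarrow> real) (ys::nat \<Rightarrow> real).
     xs 0 = a \<and> xs m = b \<and> ys 0 = c \<and> ys m = d \<and>
     (\<forall>i<m. xs i \<le> xs (Suc i) \<and> ys i \<le> ys (Suc i)) \<longrightarrow>
     (\<Sum>i<m. \<bar>f (xs (Suc i)) (ys (Suc i)) - f (xs i) (ys i)\<bar>) \<le> K)"

definition hausdorff_approx :: "real \<Rightarrow> real \<Rightarrow> 'a::metric_space set \<Rightarrow> ennreal"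
  where "hausdorff_approx s \<delta> F =
     (INF U \<in> {U :: nat \<Rightarrow> 'a set. F \<subseteq> (\<Union>i. U i) \<and> (\<forall>i. bounded (U i) \<and> diameter (U i) \<le> \<delta>)}.
        (\<Sum>i. ennreal (diameter (U i) powr s)))"

definition hausdorff_measure :: "real \<Rightarrow> 'a::metric_space set \<Rightarrow> ennreal"
  where "hausdorff_measure s F = (SUP \<delta> \<in> {0<..}. hausdorff_approx s \<delta> F)"

definition hausdorff_dim :: "'a::metric_space set \<Rightarrow> real"
  where "hausdorff_dim F = Inf {s. s \<ge> 0 \<and> hausdorff_measure s F = 0}"

definition cover_number :: "real \<Rightarrow> 'a::metric_space set \<Rightarrow> nat"
  where "cover_number \<delta> F = (LEAST n. \<exists>U :: nat \<Rightarrow> 'a set.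
      F \<subseteq> (\<Union>i<n. U i) \<and> (\<forall>i<n. bounded (U i) \<and> diameter (U i) \<le> \<delta>))"

definition has_box_dim :: "'a::metric_space set \<Rightarrow> real \<Rightarrow> bool"
  where "has_box_dim F D \<longleftrightarrow>
     ((\<lambda>\<delta>. ln (real (cover_number \<delta> F)) / - ln \<delta>) \<longlongrightarrow> D) (at_right 0)"

end

theory Submission
  imports Defs
begin


lemma kern_has_integral:
  fixes L \<gamma> :: real
  assumes "L \<le> 0" "\<gamma> > 0"
  shows "((\<lambda>u. indicator {L..0} u * (-u) powr (\<gamma>-1)) has_integral ((-L) powr \<gamma> / \<gamma>)) UNIV"
proof -
  have "((\<lambda>v. v powr (\<gamma>-1)) has_integral ((-L) powr (\<gamma>-1+1) / (\<gamma>-1+1))) {0..-L}"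
    using assms by (intro has_integral_powr_from_0) auto
  hence "((\<lambda>v. v powr (\<gamma>-1)) has_integral ((-L) powr \<gamma> / \<gamma>)) {-0..-L}" by simp
  hence "((\<lambda>u. (-u) powr (\<gamma>-1)) has_integral ((-L) powr \<gamma> / \<gamma>)) {L..0}"
    using has_integral_reflect_real[where f="\<lambda>v. v powr (\<gamma>-1)" and a=0 and b="-L"] by simp
  hence "((\<lambda>u. if u \<in> {L..0} then (-u) powr (\<gamma>-1) else 0) has_integral ((-L) powr \<gamma> / \<gamma>)) UNIV"
    by (subst has_integral_restrict_UNIV)
  thus ?thesis
    by (rule has_integral_eq[rotated]) (auto simp: indicator_def)
qed

lemma kern_nn:
  fixes L \<gamma> :: real
  assumes "L \<le> 0" "\<gamma> > 0"
  shows "(\<integral>\<^sup>+u. ennreal (indicator {L..0} u * (-u) powr (\<gamma>-1)) \<partial>lborel) = ennreal ((-L) powr \<gamma> / \<gamma>)"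
  by (rule nn_integral_has_integral_lborel[OF _ _ kern_has_integral[OF assms]]) auto

lemma kern_integrable:
  fixes L \<gamma> :: real
  assumes "L \<le> 0" "\<gamma> > 0"
  shows "integrable lborel (\<lambda>u. indicator {L..0} u * (-u) powr (\<gamma>-1))"
  by (rule integrableI_nonneg) (auto simp: kern_nn[OF assms])

lemma kern_integral:
  fixes L \<gamma> :: real
  assumes "L \<le> 0" "\<gamma> > 0"
  shows "(LINT u|lborel. indicator {L..0} u * (-u) powr (\<gamma>-1)) = (-L) powr \<gamma> / \<gamma>"
  using has_integral_integral_lborel[OF kern_integrable[OF assms]] kern_has_integral[OF assms]
  using has_integral_unique by blast



lemma sub_rep:
  fixes P \<gamma> a x :: real and \<phi> :: "real \<Rightarrow> real"
  assumes a: "0 < a" "a \<le> x" and P: "P > 0" and \<gamma>: "\<gamma> > 0" and \<phi>: "continuous_on {a..x} \<phi>"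
  shows "integral {a..x} (\<lambda>s. (x powr P - s powr P) powr (\<gamma>-1) * s powr (P-1) * \<phi> s)
    = (1/P) * (LINT u|lborel. indicator {a powr P - x powr P..0} u * (-u) powr (\<gamma>-1) * \<phi> ((x powr P + u) powr (1/P)))"
    and "integrable lborel (\<lambda>u. indicator {a powr P - x powr P..0} u * (-u) powr (\<gamma>-1) * \<phi> ((x powr P + u) powr (1/P)))"
proof -
  define X where "X = x powr P"
  define A where "A = a powr P"
  define g where "g u = (X+u) powr (1/P)" for u
  define g' where "g' u = (1/P) * (X+u) powr (1/P - 1)" for u
  define h where "h s = (X - s powr P) powr (\<gamma>-1) * s powr (P-1) * \<phi> s" for s
  have A0: "A > 0" using a unfolding A_def by simp
  have AX: "A \<le> X" unfolding A_def X_def using a P by (intro powr_mono2) auto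
  have pos: "X + u > 0" if "u \<in> {A-X..0}" for u using that A0 by auto
  have ga: "g (A-X) = a" unfolding g_def A_def using a P by (simp add: powr_powr)
  have gx: "g 0 = x" unfolding g_def X_def using a P by (simp add: powr_powr)
  have deriv: "(g has_real_derivative g' u) (at u)" if "u \<in> {A-X..0}" for u
    using pos[OF that] unfolding g_def g'_def
    by (auto intro!: derivative_eq_intros)
  have contg': "continuous_on {A-X..0} g'"
    unfolding g'_def using P by (auto intro!: continuous_intros) (use pos in fastforce)
  have g'nn: "g' u \<ge> 0" if "u \<in> {A-X..0}" for u unfolding g'_def using P by simp
  have key: "h (g u) * g' u = (1/P) * ((-u) powr (\<gamma>-1) * \<phi> (g u))" if "u \<in> {A-X..0}" for u
  proof -
    have w: "X + u > 0" using pos[OF that] .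
    have gP: "g u powr P = X + u" unfolding g_def using w P by (simp add: powr_powr)
    have g1: "g u powr (P-1) = (X+u) powr ((P-1)/P)" unfolding g_def using w P by (simp add: powr_powr)
    have "g u powr (P-1) * (X+u) powr (1/P - 1) = (X+u) powr ((P-1)/P + (1/P - 1))"
      unfolding g1 by (simp add: powr_add)
    also have "(P-1)/P + (1/P - 1) = 0" using P by (simp add: field_simps)
    finally have e: "g u powr (P-1) * (X+u) powr (1/P - 1) = 1" using w by simp
    have "h (g u) * g' u = (1/P) * ((-u) powr (\<gamma>-1) * \<phi> (g u)) * (g u powr (P-1) * (X+u) powr (1/P - 1))"
      unfolding h_def g'_def gP by (simp add: algebra_simps)
    thus ?thesis using e by simp
  qed
  obtain M where M: "\<And>s. s \<in> {a..x} \<Longrightarrow> \<bar>\<phi> s\<bar> \<le> M"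
    using compact_imp_bounded[OF compact_continuous_image[OF \<phi> compact_Icc]]
    by (auto simp: bounded_iff) (metis atLeastAtMost_iff)
  have gin: "g u \<in> {a..x}" if "u \<in> {A-X..0}" for u
  proof -
    have "g (A-X) \<le> g u" "g u \<le> g 0" unfolding g_def using that pos[OF that] P A0
      by (auto intro!: powr_mono2)
    thus ?thesis using ga gx by simp
  qed
  have hmeas: "(\<lambda>s. indicator {a..x} s *\<^sub>R h s) \<in> borel_measurable borel"
  proof -
    have "(\<lambda>s. indicator {a..x} s *\<^sub>R \<phi> s) \<in> borel_measurable borel"
      by (rule borel_measurable_continuous_on_indicator[OF _ \<phi>]) auto
    hence "(\<lambda>s. (X - s powr P) powr (\<gamma>-1) * s powr (P-1) * (indicator {a..x} s *\<^sub>R \<phi> s)) \<in> borel_measurable borel"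
      by measurable
    moreover have "(\<lambda>s. (X - s powr P) powr (\<gamma>-1) * s powr (P-1) * (indicator {a..x} s *\<^sub>R \<phi> s)) = (\<lambda>s. indicator {a..x} s *\<^sub>R h s)"
      by (auto simp: h_def indicator_def)
    ultimately show ?thesis by simp
  qed
  have kint: "integrable lborel (\<lambda>u. indicator {A-X..0} u * (-u) powr (\<gamma>-1))"
    using kern_integrable[of "A-X" \<gamma>] AX \<gamma> by auto
  have kmeas: "(\<lambda>u. indicator {A-X..0} u * (-u) powr (\<gamma>-1)) \<in> borel_measurable borel"
    using kint by (simp add: borel_measurable_integrable)
  have nnfin: "(\<integral>\<^sup>+s. ennreal (\<bar>h s\<bar> * indicator {a..x} s) \<partial>lborel) < \<infinity>"
  proof -
    have "(\<integral>\<^sup>+s. ennreal (\<bar>h s\<bar> * indicator {g (A-X)..g 0} s) \<partial>lborel)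
        = (\<integral>\<^sup>+u. ennreal (\<bar>h (g u)\<bar> * g' u * indicator {A-X..0} u) \<partial>lborel)"
    proof (rule nn_integral_substitution[OF _ deriv contg' g'nn])
      show "set_borel_measurable borel {g (A - X)..g 0} (\<lambda>s. \<bar>h s\<bar>)"
        unfolding set_borel_measurable_def ga gx using hmeas
        by (metis (no_types, lifting) borel_measurable_abs abs_mult abs_of_nonneg ext indicator_pos_le real_scaleR_def)
    qed (use AX in auto)
    also have "\<dots> \<le> (\<integral>\<^sup>+u. ennreal ((M/P) * (indicator {A-X..0} u * (-u) powr (\<gamma>-1))) \<partial>lborel)"
    proof (rule nn_integral_mono)
      fix u
      show "ennreal (\<bar>h (g u)\<bar> * g' u * indicator {A-X..0} u) \<le> ennreal ((M/P) * (indicator {A-X..0} u * (-u) powr (\<gamma>-1)))"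
      proof (cases "u \<in> {A-X..0}")
        case True
        have "\<bar>h (g u)\<bar> * g' u = \<bar>h (g u) * g' u\<bar>" using g'nn[OF True] by (simp add: abs_mult)
        also have "\<dots> = (1/P) * ((-u) powr (\<gamma>-1) * \<bar>\<phi> (g u)\<bar>)" using key[OF True] P by (simp add: abs_mult)
        also have "\<dots> \<le> (1/P) * ((-u) powr (\<gamma>-1) * M)"
          using M[OF gin[OF True]] P by (intro mult_left_mono) auto
        finally show ?thesis using True by (intro ennreal_leI) (auto simp: field_simps)
      qed simp
    qed
    also have "\<dots> = ennreal (M/P) * (\<integral>\<^sup>+u. ennreal (indicator {A-X..0} u * (-u) powr (\<gamma>-1)) \<partial>lborel)"
    proof -
      have M0: "M \<ge> 0" using M[of a] a by auto
      have "(\<integral>\<^sup>+u. ennreal ((M/P) * (indicator {A-X..0} u * (-u) powr (\<gamma>-1))) \<partial>lborel)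
          = (\<integral>\<^sup>+u. ennreal (M/P) * ennreal (indicator {A-X..0} u * (-u) powr (\<gamma>-1)) \<partial>lborel)"
        using M0 P by (intro nn_integral_cong ennreal_mult) auto
      also have "\<dots> = ennreal (M/P) * (\<integral>\<^sup>+u. ennreal (indicator {A-X..0} u * (-u) powr (\<gamma>-1)) \<partial>lborel)"
        using kmeas by (intro nn_integral_cmult) auto
      finally show ?thesis .
    qed
    also have "\<dots> < \<infinity>" using kern_nn[of "A-X" \<gamma>] AX \<gamma> by (simp add: ennreal_mult_less_top)
    finally show ?thesis unfolding ga gx .
  qed
  have hint: "set_integrable lborel {a..x} h"
    unfolding set_integrable_def
  proof (rule integrableI_bounded)
    show "(\<lambda>s. indicator {a..x} s *\<^sub>R h s) \<in> borel_measurable lborel" using hmeas by simp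
    show "(\<integral>\<^sup>+s. ennreal (norm (indicator {a..x} s *\<^sub>R h s)) \<partial>lborel) < \<infinity>"
      using nnfin by (simp add: abs_mult mult.commute)
  qed
  have hint': "set_integrable lborel {g (A-X)..g 0} h" using hint ga gx by simp
  note S = integral_substitution[OF hint' deriv contg' g'nn]
  have eqfun: "(\<lambda>u. h (g u) * g' u * indicator {A-X..0} u) = (\<lambda>u. (1/P) * (indicator {A-X..0} u * (-u) powr (\<gamma>-1) * \<phi> (g u)))"
    using key by (auto simp: indicator_def fun_eq_iff)
  have "integral {a..x} h = (LINT s:{a..x}|lborel. h s)"
    using set_borel_integral_eq_integral(2)[OF hint] by simp
  also have "\<dots> = (LINT s|lborel. h s * indicator {g (A-X)..g 0} s)"
    unfolding set_lebesgue_integral_def ga gx by (simp add: mult.commute)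
  also have "\<dots> = (LINT u|lborel. h (g u) * g' u * indicator {A-X..0} u)"
    using S(2) AX by simp
  also have "\<dots> = (1/P) * (LINT u|lborel. indicator {A-X..0} u * (-u) powr (\<gamma>-1) * \<phi> (g u))"
    unfolding eqfun by simp
  finally show "integral {a..x} (\<lambda>s. (x powr P - s powr P) powr (\<gamma>-1) * s powr (P-1) * \<phi> s)
    = (1/P) * (LINT u|lborel. indicator {a powr P - x powr P..0} u * (-u) powr (\<gamma>-1) * \<phi> ((x powr P + u) powr (1/P)))"
    unfolding h_def g_def X_def A_def .
  have "integrable lborel (\<lambda>u. h (g u) * g' u * indicator {A-X..0} u)"
    using S(1) AX unfolding set_integrable_def by (simp add: mult.commute)
  hence "integrable lborel (\<lambda>u. (1/P) * (indicator {A-X..0} u * (-u) powr (\<gamma>-1) * \<phi> (g u)))"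
    unfolding eqfun .
  hence "integrable lborel (\<lambda>u. indicator {A-X..0} u * (-u) powr (\<gamma>-1) * \<phi> (g u))"
    using P by (subst (asm) integrable_mult_left_iff) simp
  thus "integrable lborel (\<lambda>u. indicator {a powr P - x powr P..0} u * (-u) powr (\<gamma>-1) * \<phi> ((x powr P + u) powr (1/P)))"
    unfolding g_def X_def A_def .
qed



lemma gin:
  fixes Q c y w :: real
  assumes "0 < c" "c \<le> y" "Q > 0" "w \<in> {c powr Q - y powr Q..0}"
  shows "(y powr Q + w) powr (1/Q) \<in> {c..y}"
proof -
  have "c powr Q \<le> y powr Q + w" "y powr Q + w \<le> y powr Q" using assms by auto
  moreover have "0 < c powr Q" using assms by simp
  ultimately have nn: "0 \<le> y powr Q + w" by linarith
  have "(c powr Q) powr (1/Q) \<le> (y powr Q + w) powr (1/Q)" "(y powr Q + w) powr (1/Q) \<le> (y powr Q) powr (1/Q)"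
    using assms nn by (auto intro!: powr_mono2)
  thus ?thesis using assms by (simp add: powr_powr)
qed

lemma cont_slice:
  fixes f :: "real \<Rightarrow> real \<Rightarrow> real"
  assumes "continuous_on ({a..b} \<times> {c..d}) (\<lambda>(x, y). f x y)" "s \<in> {a..b}" "y \<le> d"
  shows "continuous_on {c..y} (f s)"
proof -
  have "continuous_on {c..y} ((\<lambda>(x, y). f x y) \<circ> (\<lambda>t. (s, t)))"
    using assms(2,3) by (intro continuous_on_compose) (auto intro!: continuous_intros continuous_on_subset[OF assms(1)])
  thus ?thesis by (simp add: o_def)
qed

lemma cont_slice1:
  fixes f :: "real \<Rightarrow> real \<Rightarrow> real"
  assumes "continuous_on ({a..b} \<times> {c..d}) (\<lambda>(x, y). f x y)" "t \<in> {c..d}" "x \<le> b"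
  shows "continuous_on {a..x} (\<lambda>s. f s t)"
proof -
  have "continuous_on {a..x} ((\<lambda>(x, y). f x y) \<circ> (\<lambda>s. (s, t)))"
    using assms(2,3) by (intro continuous_on_compose) (auto intro!: continuous_intros continuous_on_subset[OF assms(1)])
  thus ?thesis by (simp add: o_def)
qed

lemma J_cont:
  fixes f :: "real \<Rightarrow> real \<Rightarrow> real"
  assumes fc: "continuous_on ({a..b} \<times> {c..d}) (\<lambda>(x, y). f x y)"
    and c: "0 < c" "c \<le> y" "y \<le> d" and Q: "Q > 0" and \<beta>: "\<beta> > 0"
  shows "continuous_on {a..b} (\<lambda>s. LINT w|lborel. indicator {c powr Q - y powr Q..0} w * (-w) powr (\<beta>-1) * f s ((y powr Q + w) powr (1/Q)))"
proof -
  define L where "L = c powr Q - y powr Q"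
  define g where "g w = (y powr Q + w) powr (1/Q)" for w
  define k where "k w = indicator {L..0} w * (-w) powr (\<beta>-1)" for w
  have L0: "L \<le> 0" unfolding L_def using c Q by (auto intro!: powr_mono2)
  have kint: "integrable lborel k" unfolding k_def using kern_integrable[OF L0 \<beta>] .
  have knn: "k w \<ge> 0" for w unfolding k_def by simp
  have gin': "g w \<in> {c..y}" if "w \<in> {L..0}" for w using gin[of c y Q w] c Q that unfolding g_def L_def by simp
  have int: "integrable lborel (\<lambda>w. k w * f s (g w))" if "s \<in> {a..b}" for s
    using sub_rep(2)[of c y Q \<beta> "f s"] c Q \<beta> cont_slice[OF fc that c(3)]
    unfolding k_def g_def L_def by (simp add: mult.assoc)
  have uc: "uniformly_continuous_on ({a..b} \<times> {c..d}) (\<lambda>(x, y). f x y)"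
    using compact_uniformly_continuous[OF fc] compact_Times by blast
  define I where "I = (LINT w|lborel. k w)"
  have I0: "I \<ge> 0" unfolding I_def using knn by simp
  show ?thesis
    unfolding continuous_on_iff L_def[symmetric] g_def[symmetric] mult.assoc k_def[symmetric]
  proof (intro ballI allI impI)
    fix s e :: real assume s: "s \<in> {a..b}" and e: "e > 0"
    define e' where "e' = e / (I + 1)"
    have e': "e' > 0" unfolding e'_def using e I0 by simp
    obtain dl where dl: "dl > 0" "\<And>z z'. z \<in> {a..b} \<times> {c..d} \<Longrightarrow> z' \<in> {a..b} \<times> {c..d} \<Longrightarrow> dist z' z < dl \<Longrightarrow>
        dist ((\<lambda>(x, y). f x y) z') ((\<lambda>(x, y). f x y) z) < e'"
      using uc e' unfolding uniformly_continuous_on_def by metis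
    show "\<exists>dd>0. \<forall>s'\<in>{a..b}. dist s' s < dd \<longrightarrow> dist (LINT w|lborel. k w * f s' (g w)) (LINT w|lborel. k w * f s (g w)) < e"
    proof (intro exI[of _ dl] conjI ballI impI)
      fix s' assume s': "s' \<in> {a..b}" and ds: "dist s' s < dl"
      have pw: "\<bar>k w * f s' (g w) - k w * f s (g w)\<bar> \<le> k w * e'" for w
      proof (cases "w \<in> {L..0}")
        case True
        have "dist ((\<lambda>(x, y). f x y) (s', g w)) ((\<lambda>(x, y). f x y) (s, g w)) < e'"
          using dl(2)[of "(s, g w)" "(s', g w)"] s s' ds gin'[OF True] c
          by (auto simp: dist_Pair_Pair dist_real_def)
        hence "\<bar>f s' (g w) - f s (g w)\<bar> \<le> e'" by (simp add: dist_real_def)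
        hence "k w * \<bar>f s' (g w) - f s (g w)\<bar> \<le> k w * e'" using knn by (intro mult_left_mono) auto
        thus ?thesis using knn by (simp add: abs_mult right_diff_distrib[symmetric])
      next
        case False thus ?thesis by (simp add: k_def)
      qed
      have "dist (LINT w|lborel. k w * f s' (g w)) (LINT w|lborel. k w * f s (g w))
          = \<bar>LINT w|lborel. k w * f s' (g w) - k w * f s (g w)\<bar>"
        using int[OF s] int[OF s'] by (simp add: dist_real_def)
      also have "\<dots> \<le> (LINT w|lborel. k w * e')"
        by (rule integral_abs_bound_integral) (use int[OF s] int[OF s'] kint pw in auto)
      also have "\<dots> = I * e'" unfolding I_def by simp
      also have "\<dots> < e" unfolding e'_def using e I0 by (simp add: field_simps)
      finally show "dist (LINT w|lborel. k w * f s' (g w)) (LINT w|lborel. k w * f s (g w)) < e" .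
    qed (use dl in auto)
  qed
qed



definition clampG :: "real \<Rightarrow> real \<Rightarrow> real \<Rightarrow> real \<Rightarrow> real \<Rightarrow> real \<Rightarrow> (real \<Rightarrow> real \<Rightarrow> real) \<Rightarrow> real \<times> real \<Rightarrow> real" where
  "clampG P Q A B C D f Z = (if A \<le> fst Z \<and> C \<le> snd Z then
     f ((max A (min (fst Z) B)) powr (1/P)) ((max C (min (snd Z) D)) powr (1/Q)) else 0)"

definition Psi :: "real \<Rightarrow> real \<Rightarrow> real \<Rightarrow> real \<Rightarrow> real \<times> real \<Rightarrow> real" where
  "Psi \<alpha> \<beta> L1 L2 v = (indicator {L1..0} (fst v) * (-fst v) powr (\<alpha>-1)) * (indicator {L2..0} (snd v) * (-snd v) powr (\<beta>-1))"

lemma Psi_nn: "Psi \<alpha> \<beta> L1 L2 v \<ge> 0" unfolding Psi_def by simp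

lemma Psi_meas2: "Psi \<alpha> \<beta> L1 L2 \<in> borel_measurable (lborel \<Otimes>\<^sub>M lborel)"
  unfolding Psi_def by measurable

lemma Psi_meas: "Psi \<alpha> \<beta> L1 L2 \<in> borel_measurable borel"
  using Psi_meas2[of \<alpha> \<beta> L1 L2] by (simp add: lborel_prod)

lemma Psi_integrable:
  assumes "L1 \<le> 0" "L2 \<le> 0" "\<alpha> > 0" "\<beta> > 0"
  shows "integrable lborel (Psi \<alpha> \<beta> L1 L2)"
proof -
  define k1 where "k1 u = indicator {L1..0} u * (-u) powr (\<alpha>-1)" for u :: real
  define k2 where "k2 u = indicator {L2..0} u * (-u) powr (\<beta>-1)" for u :: real
  have m1: "k1 \<in> borel_measurable borel" "k2 \<in> borel_measurable borel" unfolding k1_def k2_def by measurable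
  have n1: "k1 u \<ge> 0" "k2 u \<ge> 0" for u unfolding k1_def k2_def by auto
  have "(\<integral>\<^sup>+v. ennreal (Psi \<alpha> \<beta> L1 L2 v) \<partial>(lborel \<Otimes>\<^sub>M lborel)) = (\<integral>\<^sup>+u. \<integral>\<^sup>+w. ennreal (k1 u) * ennreal (k2 w) \<partial>lborel \<partial>lborel)"
  proof -
    have "(\<lambda>v. ennreal (k1 (fst v) * k2 (snd v))) \<in> borel_measurable (lborel \<Otimes>\<^sub>M lborel)"
      using m1 by measurable
    from lborel.nn_integral_fst[OF this] show ?thesis
      by (auto simp: ennreal_mult n1 intro!: nn_integral_cong) (auto simp: Psi_def k1_def k2_def ennreal_mult)
  qed
  also have "\<dots> = (\<integral>\<^sup>+u. ennreal (k1 u) * (\<integral>\<^sup>+w. ennreal (k2 w) \<partial>lborel) \<partial>lborel)"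
    using m1 by (intro nn_integral_cong nn_integral_cmult) measurable
  also have "\<dots> = (\<integral>\<^sup>+u. ennreal (k1 u) \<partial>lborel) * (\<integral>\<^sup>+w. ennreal (k2 w) \<partial>lborel)"
    using m1 by (intro nn_integral_multc) measurable
  also have "\<dots> < \<infinity>" unfolding k1_def k2_def using assms
    by (simp add: kern_nn ennreal_mult_less_top)
  finally have fin: "(\<integral>\<^sup>+v. ennreal (Psi \<alpha> \<beta> L1 L2 v) \<partial>(lborel \<Otimes>\<^sub>M lborel)) < \<infinity>" .
  have "integrable (lborel \<Otimes>\<^sub>M lborel) (Psi \<alpha> \<beta> L1 L2)"
    by (rule integrableI_nonneg) (use Psi_meas2 fin Psi_nn in auto)
  thus ?thesis by (simp add: lborel_prod)
qed



lemma root_in: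
  fixes a b P W :: real
  assumes "0 < a" "a \<le> b" "P > 0" "a powr P \<le> W" "W \<le> b powr P"
  shows "W powr (1/P) \<in> {a..b}"
proof -
  have "0 < a powr P" using assms by simp
  hence W: "0 \<le> W" using assms by linarith
  have "(a powr P) powr (1/P) \<le> W powr (1/P)" "W powr (1/P) \<le> (b powr P) powr (1/P)"
    using assms W by (auto intro!: powr_mono2)
  moreover have "b \<ge> 0" using assms by simp
  ultimately show ?thesis using assms by (simp add: powr_powr)
qed

lemma clampG_eq:
  assumes "A \<le> U" "U \<le> B" "C \<le> V" "V \<le> D"
  shows "clampG P Q A B C D f (U, V) = f (U powr (1/P)) (V powr (1/Q))"
  using assms by (simp add: clampG_def)

lemma clampG_meas:
  fixes f :: "real \<Rightarrow> real \<Rightarrow> real"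
  assumes fc: "continuous_on ({a..b} \<times> {c..d}) (\<lambda>(x, y). f x y)"
    and ab: "0 < a" "a \<le> b" "0 < c" "c \<le> d" and PQ: "P > 0" "Q > 0"
  shows "clampG P Q (a powr P) (b powr P) (c powr Q) (d powr Q) f \<in> borel_measurable borel"
proof -
  define A where "A = a powr P"
  define B where "B = b powr P"
  define C where "C = c powr Q"
  define D where "D = d powr Q"
  note A_B_C_D_def = A_def B_def C_def D_def
  have A0: "A > 0" "C > 0" unfolding A_B_C_D_def using ab by auto
  have AB: "A \<le> B" "C \<le> D" unfolding A_B_C_D_def using ab PQ by (auto intro!: powr_mono2)
  define cl where "cl Z = ((max A (min (fst Z) B)) powr (1/P), (max C (min (snd Z) D)) powr (1/Q))" for Z :: "real \<times> real"
  have clc: "continuous_on UNIV cl" unfolding cl_def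
    using A0 by (intro continuous_intros) (auto simp: max_def)
  have clin: "cl Z \<in> {a..b} \<times> {c..d}" for Z
  proof -
    have "(max A (min (fst Z) B)) powr (1/P) \<in> {a..b}" unfolding A_def B_def
      by (rule root_in) (use ab PQ AB A_B_C_D_def in auto)
    moreover have "(max C (min (snd Z) D)) powr (1/Q) \<in> {c..d}" unfolding C_def D_def
      by (rule root_in) (use ab PQ AB A_B_C_D_def in auto)
    ultimately show ?thesis unfolding cl_def by auto
  qed
  have "continuous_on UNIV ((\<lambda>(x, y). f x y) \<circ> cl)"
    by (rule continuous_on_compose[OF clc continuous_on_subset[OF fc]]) (use clin in blast)
  hence m: "((\<lambda>(x, y). f x y) \<circ> cl) \<in> borel_measurable borel"
    by (rule borel_measurable_continuous_onI)
  have e: "clampG P Q A B C D f = (\<lambda>Z. indicator ({A..} \<times> {C..}) Z * ((\<lambda>(x, y). f x y) \<circ> cl) Z)"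
    by (auto simp: clampG_def fun_eq_iff cl_def indicator_def)
  have S: "{A..} \<times> {C..} \<in> sets borel" by (intro borel_closed closed_Times) auto
  show ?thesis unfolding A_B_C_D_def[symmetric] e
    using borel_measurable_times[OF borel_measurable_indicator[OF S] m] .
qed

lemma clampG_bound:
  fixes f :: "real \<Rightarrow> real \<Rightarrow> real"
  assumes "\<And>x y. x \<in> {a..b} \<Longrightarrow> y \<in> {c..d} \<Longrightarrow> \<bar>f x y\<bar> \<le> M" "M \<ge> 0"
    and ab: "0 < a" "a \<le> b" "0 < c" "c \<le> d" and PQ: "P > 0" "Q > 0"
  shows "\<bar>clampG P Q (a powr P) (b powr P) (c powr Q) (d powr Q) f Z\<bar> \<le> M"
proof -
  have AB: "a powr P \<le> b powr P" "c powr Q \<le> d powr Q" using ab PQ by (auto intro!: powr_mono2)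
  have "(max (a powr P) (min (fst Z) (b powr P))) powr (1/P) \<in> {a..b}"
    by (rule root_in) (use ab PQ AB in auto)
  moreover have "(max (c powr Q) (min (snd Z) (d powr Q))) powr (1/Q) \<in> {c..d}"
    by (rule root_in) (use ab PQ AB in auto)
  ultimately show ?thesis unfolding clampG_def using assms by auto
qed



lemma rep:
  fixes f :: "real \<Rightarrow> real \<Rightarrow> real"
  assumes fc: "continuous_on ({a..b} \<times> {c..d}) (\<lambda>(x, y). f x y)"
    and ab: "0 < a" "a < b" "0 < c" "c < d" and pq: "p > -1" "q > -1"
    and \<alpha>\<beta>: "\<alpha> > 0" "\<beta> > 0" and x: "x \<in> {a..b}" and y: "y \<in> {c..d}"
  shows "katugampola_int p q a c \<alpha> \<beta> f x y =
    ((p + 1) powr (1 - \<alpha>) * (q + 1) powr (1 - \<beta>) / (Gamma \<alpha> * Gamma \<beta>)) / ((p+1)*(q+1)) *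
    (LINT v|lborel. Psi \<alpha> \<beta> (a powr (p+1) - b powr (p+1)) (c powr (q+1) - d powr (q+1)) v *
       clampG (p+1) (q+1) (a powr (p+1)) (b powr (p+1)) (c powr (q+1)) (d powr (q+1)) f ((x powr (p+1), y powr (q+1)) + v))"
proof -
  define P where "P = p + 1"
  define Q where "Q = q + 1"
  have P: "P > 0" and Q: "Q > 0" using pq unfolding P_def Q_def by auto
  define A where "A = a powr P"
  define B where "B = b powr P"
  define C where "C = c powr Q"
  define D where "D = d powr Q"
  define X where "X = x powr P"
  define Y where "Y = y powr Q"
  define Kc where "Kc = P powr (1 - \<alpha>) * Q powr (1 - \<beta>) / (Gamma \<alpha> * Gamma \<beta>)"
  define G where "G = clampG P Q A B C D f"
  define Ps where "Ps = Psi \<alpha> \<beta> (A - B) (C - D)"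
  define Jl where "Jl s = (LINT w|lborel. indicator {C - Y..0} w * (-w) powr (\<beta>-1) * f s ((Y + w) powr (1/Q)))" for s
  have xa: "a \<le> x" "x \<le> b" and yc: "c \<le> y" "y \<le> d" using x y by auto
  have AX: "A \<le> X" "X \<le> B" unfolding A_def X_def B_def using ab xa P by (auto intro!: powr_mono2)
  have CY: "C \<le> Y" "Y \<le> D" unfolding C_def Y_def D_def using ab yc Q by (auto intro!: powr_mono2)
  have A0: "A > 0" "C > 0" unfolding A_def C_def using ab by auto
  obtain M where M: "\<And>s t. s \<in> {a..b} \<Longrightarrow> t \<in> {c..d} \<Longrightarrow> \<bar>f s t\<bar> \<le> M" "M \<ge> 0"
  proof -
    obtain M where "\<forall>z \<in> (\<lambda>(x, y). f x y) ` ({a..b} \<times> {c..d}). norm z \<le> M"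
      using compact_imp_bounded[OF compact_continuous_image[OF fc compact_Times[OF compact_Icc compact_Icc]]]
      by (auto simp: bounded_iff)
    hence "\<And>s t. s \<in> {a..b} \<Longrightarrow> t \<in> {c..d} \<Longrightarrow> \<bar>f s t\<bar> \<le> M" by force
    moreover have "M \<ge> 0" using calculation[of a c] ab by force
    ultimately show ?thesis using that by blast
  qed
  have inner: "integral {c..y} (\<lambda>t. (X - s powr P) powr (\<alpha> - 1) * (Y - t powr Q) powr (\<beta> - 1) * s powr p * t powr q * f s t)
      = ((X - s powr P) powr (\<alpha> - 1) * s powr (P - 1)) * ((1/Q) * Jl s)" if s: "s \<in> {a..b}" for s
  proof -
    have "(\<lambda>t. (X - s powr P) powr (\<alpha> - 1) * (Y - t powr Q) powr (\<beta> - 1) * s powr p * t powr q * f s t)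
        = (\<lambda>t. ((X - s powr P) powr (\<alpha> - 1) * s powr (P - 1)) * ((y powr Q - t powr Q) powr (\<beta> - 1) * t powr (Q - 1) * f s t))"
      by (simp add: P_def Q_def Y_def fun_eq_iff algebra_simps)
    hence "integral {c..y} (\<lambda>t. (X - s powr P) powr (\<alpha> - 1) * (Y - t powr Q) powr (\<beta> - 1) * s powr p * t powr q * f s t)
       = ((X - s powr P) powr (\<alpha> - 1) * s powr (P - 1)) * integral {c..y} (\<lambda>t. (y powr Q - t powr Q) powr (\<beta> - 1) * t powr (Q - 1) * f s t)"
      by simp
    also have "integral {c..y} (\<lambda>t. (y powr Q - t powr Q) powr (\<beta> - 1) * t powr (Q - 1) * f s t) = (1/Q) * Jl s"
      unfolding Jl_def C_def Y_def
      by (rule sub_rep(1)) (use ab yc Q \<alpha>\<beta> cont_slice[OF fc s yc(2)] in auto)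
    finally show ?thesis .
  qed
  have Jc: "continuous_on {a..x} Jl"
    unfolding Jl_def C_def Y_def
    by (rule continuous_on_subset[OF J_cont[OF fc ab(3) yc Q \<alpha>\<beta>(2)]]) (use xa in auto)
  have step1: "katugampola_int p q a c \<alpha> \<beta> f x y = Kc * ((1/Q) * integral {a..x} (\<lambda>s. (X - s powr P) powr (\<alpha> - 1) * s powr (P - 1) * Jl s))"
  proof -
    have "katugampola_int p q a c \<alpha> \<beta> f x y = Kc * integral {a..x} (\<lambda>s. ((X - s powr P) powr (\<alpha> - 1) * s powr (P - 1)) * ((1/Q) * Jl s))"
      unfolding katugampola_int_def P_def[symmetric] Q_def[symmetric]
      unfolding Kc_def[symmetric] X_def[symmetric] Y_def[symmetric]
      by (rule arg_cong[where f="\<lambda>t. Kc * t"], rule integral_cong) (use inner xa in auto)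
    also have "(\<lambda>s. ((X - s powr P) powr (\<alpha> - 1) * s powr (P - 1)) * ((1/Q) * Jl s)) = (\<lambda>s. (1/Q) * ((X - s powr P) powr (\<alpha> - 1) * s powr (P - 1) * Jl s))"
      by (simp add: fun_eq_iff algebra_simps)
    finally show ?thesis by simp
  qed
  have step2: "integral {a..x} (\<lambda>s. (X - s powr P) powr (\<alpha> - 1) * s powr (P - 1) * Jl s)
      = (1/P) * (LINT u|lborel. indicator {A - X..0} u * (-u) powr (\<alpha>-1) * Jl ((X + u) powr (1/P)))"
    unfolding X_def A_def by (rule sub_rep(1)) (use ab xa P \<alpha>\<beta> Jc in auto)
  define H where "H v = Ps v * G ((X, Y) + v)" for v
  have Gm: "G \<in> borel_measurable borel" unfolding G_def A_def B_def C_def D_def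
    by (rule clampG_meas[OF fc]) (use ab P Q in auto)
  have Gb: "\<bar>G z\<bar> \<le> M" for z unfolding G_def A_def B_def C_def D_def
    by (rule clampG_bound) (use M ab P Q in auto)
  have Hm: "H \<in> borel_measurable borel"
  proof -
    have sh: "(\<lambda>v::real\<times>real. (X, Y) + v) \<in> borel_measurable borel"
      by (intro borel_measurable_continuous_onI continuous_intros)
    show ?thesis unfolding H_def Ps_def
      using borel_measurable_times[OF Psi_meas measurable_compose[OF sh Gm]] by (simp add: o_def)
  qed
  have Psint: "integrable lborel Ps" unfolding Ps_def
    by (rule Psi_integrable) (use AX CY \<alpha>\<beta> in auto)
  have Hint: "integrable lborel H"
  proof (rule Bochner_Integration.integrable_bound[where f="\<lambda>v. M * Ps v"])
    show "integrable lborel (\<lambda>v. M * Ps v)" using Psint by simp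
    show "H \<in> borel_measurable lborel" using Hm by simp
    show "AE v in lborel. norm (H v) \<le> norm (M * Ps v)"
    proof (rule AE_I2)
      fix v
      have "\<bar>Ps v\<bar> * \<bar>G ((X, Y) + v)\<bar> \<le> \<bar>Ps v\<bar> * M" by (intro mult_left_mono Gb) auto
      thus "norm (H v) \<le> norm (M * Ps v)" using M(2) by (simp add: H_def abs_mult mult.commute)
    qed
  qed
  have Hint2: "integrable (lborel \<Otimes>\<^sub>M lborel) H" using Hint by (simp add: lborel_prod)
  have slice: "(LINT w|lborel. H (u, w)) = indicator {A - X..0} u * (-u) powr (\<alpha>-1) * Jl ((X + u) powr (1/P))" for u
  proof (cases "u \<in> {A - X..0}")
    case True
    have uAB: "u \<in> {A - B..0}" using True AX by auto
    have "H (u, w) = (indicator {A - X..0} u * (-u) powr (\<alpha>-1)) * (indicator {C - Y..0} w * (-w) powr (\<beta>-1) * f ((X + u) powr (1/P)) ((Y + w) powr (1/Q)))" for w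
    proof (cases "w \<in> {C - Y..0}")
      case True2: True
      have "G ((X, Y) + (u, w)) = f ((X + u) powr (1/P)) ((Y + w) powr (1/Q))"
        unfolding G_def using True True2 AX CY clampG_eq[of A "X+u" B C "Y+w" D P Q f] by auto
      moreover have "w \<in> {C - D..0}" using True2 CY by auto
      ultimately show ?thesis using True uAB True2 by (simp add: H_def Ps_def Psi_def)
    next
      case False2: False
      show ?thesis
      proof (cases "w \<le> 0")
        case True3: True
        hence "Y + w < C" using False2 by auto
        hence "G ((X, Y) + (u, w)) = 0" by (simp add: G_def clampG_def)
        thus ?thesis using False2 by (simp add: H_def)
      next
        case False3: False
        thus ?thesis by (simp add: H_def Ps_def Psi_def)
      qed
    qed
    hence "(LINT w|lborel. H (u, w)) = (LINT w|lborel. (indicator {A - X..0} u * (-u) powr (\<alpha>-1)) * (indicator {C - Y..0} w * (-w) powr (\<beta>-1) * f ((X + u) powr (1/P)) ((Y + w) powr (1/Q))))"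
      by simp
    also have "\<dots> = indicator {A - X..0} u * (-u) powr (\<alpha>-1) * Jl ((X + u) powr (1/P))"
      unfolding Jl_def by (simp add: mult.assoc)
    finally show ?thesis .
  next
    case False
    have "H (u, w) = 0" for w
    proof (cases "A - B \<le> u \<and> u \<le> 0")
      case True
      hence "X + u < A" using False by auto
      thus ?thesis by (simp add: H_def G_def clampG_def)
    next
      case False
      thus ?thesis by (auto simp: H_def Ps_def Psi_def)
    qed
    thus ?thesis using False by simp
  qed
  have step3: "(LINT u|lborel. indicator {A - X..0} u * (-u) powr (\<alpha>-1) * Jl ((X + u) powr (1/P))) = (LINT v|lborel. H v)"
  proof -
    have "(LINT v|lborel. H v) = (LINT v|(lborel \<Otimes>\<^sub>M lborel). H v)" by (simp add: lborel_prod)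
    also have "\<dots> = (LINT u|lborel. LINT w|lborel. H (u, w))"
      using lborel_pair.integral_fst'[OF Hint2] by simp
    finally show ?thesis by (simp add: slice)
  qed
  show ?thesis
    unfolding step1 step2 step3 H_def Ps_def G_def P_def[symmetric] Q_def[symmetric]
    unfolding Kc_def[symmetric] A_def[symmetric] B_def[symmetric] C_def[symmetric] D_def[symmetric] X_def[symmetric] Y_def[symmetric]
    by simp
qed



fun var :: "('a \<Rightarrow> real) \<Rightarrow> 'a list \<Rightarrow> real" where
  "var h (z1 # z2 # zs) = \<bar>h z2 - h z1\<bar> + var h (z2 # zs)"
| "var h _ = 0"

definition le2 :: "real \<times> real \<Rightarrow> real \<times> real \<Rightarrow> bool" where
  "le2 z w \<longleftrightarrow> fst z \<le> fst w \<and> snd z \<le> snd w"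

lemma var_nn: "var h L \<ge> 0"
  by (induction h L rule: var.induct) auto

lemma var_snoc2: "var h (L @ [z, w]) = var h (L @ [z]) + \<bar>h w - h z\<bar>"
  by (induction L rule: induct_list012) auto

lemma var_Cons_ge: "var h L \<le> var h (x # L)"
  by (cases L) (auto simp: var_nn)

lemma var_snoc_ge: "var h L \<le> var h (L @ [w])"
proof (induction L rule: induct_list012)
  case (3 x y zs)
  thus ?case by simp
qed (auto simp: var_nn)

lemma var_nth: "var h L = (\<Sum>i < length L - 1. \<bar>h (L ! Suc i) - h (L ! i)\<bar>)"
proof (induction L rule: induct_list012)
  case (3 x y zs)
  have "var h (x # y # zs) = \<bar>h y - h x\<bar> + var h (y # zs)" by simp
  also have "var h (y # zs) = (\<Sum>i < length zs. \<bar>h ((y # zs) ! Suc i) - h ((y # zs) ! i)\<bar>)"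
    using 3(2) by simp
  also have "\<bar>h y - h x\<bar> + \<dots> = (\<Sum>i < Suc (length zs). \<bar>h ((x # y # zs) ! Suc i) - h ((x # y # zs) ! i)\<bar>)"
    by (subst sum.lessThan_Suc_shift) simp
  finally show ?case by simp
qed auto

lemma var_map: "var h (map g L) = var (h \<circ> g) L"
  by (induction L rule: induct_list012) auto

lemma arzela_chain:
  assumes "arzela_bv a b c d f" "a \<le> b" "c \<le> d"
  obtains K where "\<And>L. sorted_wrt le2 L \<Longrightarrow> set L \<subseteq> {a..b} \<times> {c..d} \<Longrightarrow> var (\<lambda>z. f (fst z) (snd z)) L \<le> K"
proof -
  obtain K where K: "\<And>m xs ys. xs 0 = a \<Longrightarrow> xs m = b \<Longrightarrow> ys 0 = c \<Longrightarrow> ys m = d \<Longrightarrow>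
     (\<forall>i<m. xs i \<le> xs (Suc i) \<and> ys i \<le> ys (Suc i)) \<Longrightarrow>
     (\<Sum>i<m. \<bar>f (xs (Suc i)) (ys (Suc i)) - f (xs i) (ys i)\<bar>) \<le> K"
    using assms unfolding arzela_bv_def by blast
  have "var (\<lambda>z. f (fst z) (snd z)) L \<le> K" if L: "sorted_wrt le2 L" "set L \<subseteq> {a..b} \<times> {c..d}" for L
  proof -
    define L' where "L' = (a, c) # L @ [(b, d)]"
    have s: "sorted_wrt le2 L'" unfolding L'_def using L assms(2,3)
      by (auto simp: sorted_wrt_append le2_def subset_iff)
    define m where "m = length L' - 1"
    have lm: "length L' = Suc m" unfolding m_def L'_def by simp
    have "var (\<lambda>z. f (fst z) (snd z)) L \<le> var (\<lambda>z. f (fst z) (snd z)) L'"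
      unfolding L'_def using var_Cons_ge var_snoc_ge order_trans by (metis append_Cons)
    also have "\<dots> = (\<Sum>i<m. \<bar>f (fst (L' ! Suc i)) (snd (L' ! Suc i)) - f (fst (L' ! i)) (snd (L' ! i))\<bar>)"
      unfolding var_nth m_def by simp
    also have "\<dots> \<le> K"
    proof (rule K)
      show "fst (L' ! 0) = a" "snd (L' ! 0) = c" unfolding L'_def by auto
      have ne: "L' \<noteq> []" unfolding L'_def by simp
      have "L' ! m = last L'" using last_conv_nth[OF ne] lm by simp
      thus "fst (L' ! m) = b" "snd (L' ! m) = d" unfolding L'_def by auto
      show "\<forall>i<m. fst (L' ! i) \<le> fst (L' ! Suc i) \<and> snd (L' ! i) \<le> snd (L' ! Suc i)"
        using s lm by (auto simp: sorted_wrt_iff_nth_less le2_def)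
    qed
    finally show ?thesis .
  qed
  thus ?thesis using that by blast
qed

definition Vmaj :: "(real \<times> real \<Rightarrow> real) \<Rightarrow> real \<times> real \<Rightarrow> real" where
  "Vmaj G z = Sup {var G (L @ [z]) | L. sorted_wrt le2 (L @ [z])}"

lemma Vmaj_props:
  assumes K: "\<And>L. sorted_wrt le2 L \<Longrightarrow> var G L \<le> K"
  shows "0 \<le> Vmaj G z" "Vmaj G z \<le> K"
    and "le2 z w \<Longrightarrow> Vmaj G z + \<bar>G w - G z\<bar> \<le> Vmaj G w"
proof -
  let ?S = "\<lambda>z. {var G (L @ [z]) | L. sorted_wrt le2 (L @ [z])}"
  have ne: "?S z \<noteq> {}" for z by (auto intro!: exI[of _ "[]"])
  have bdd: "bdd_above (?S z)" for z using K by (auto simp: bdd_above_def)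
  have "var G ([] @ [z]) \<in> ?S z" by (intro CollectI exI[of _ "[]"]) simp
  hence "0 \<le> Vmaj G z" unfolding Vmaj_def using bdd[of z] cSup_upper[of _ "?S z"] by force
  thus "0 \<le> Vmaj G z" .
  show "Vmaj G z \<le> K" unfolding Vmaj_def by (rule cSup_least[OF ne]) (use K in auto)
  assume zw: "le2 z w"
  have "v \<le> Vmaj G w - \<bar>G w - G z\<bar>" if vS: "v \<in> ?S z" for v
  proof -
    obtain L where L: "v = var G (L @ [z])" "sorted_wrt le2 (L @ [z])" using vS by auto
    have "sorted_wrt le2 ((L @ [z]) @ [w])"
      using L(2) zw by (auto simp: sorted_wrt_append le2_def)
    hence "var G (L @ [z, w]) \<in> ?S w" by (metis (mono_tags, lifting) append.assoc append_Cons append_Nil mem_Collect_eq)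
    hence "var G (L @ [z, w]) \<le> Vmaj G w" unfolding Vmaj_def using bdd[of w] by (rule cSup_upper)
    thus ?thesis using L(1) var_snoc2[of G L z w] by simp
  qed
  hence "Vmaj G z \<le> Vmaj G w - \<bar>G w - G z\<bar>" unfolding Vmaj_def using ne by (intro cSup_least) auto
  thus "Vmaj G z + \<bar>G w - G z\<bar> \<le> Vmaj G w" by simp
qed

lemma telescope2:
  fixes V :: "real \<times> real \<Rightarrow> real" and \<xi> \<eta> :: "nat \<Rightarrow> real"
  assumes "\<And>z. 0 \<le> V z" "\<And>z. V z \<le> K"
  shows "(\<Sum>i<n. \<Sum>j<n. V (\<xi> (Suc i), \<eta> (Suc j)) - V (\<xi> i, \<eta> j)) \<le> 2 * real n * K"
proof -
  have split: "V (\<xi> (Suc i), \<eta> (Suc j)) - V (\<xi> i, \<eta> j) =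
      (V (\<xi> (Suc i), \<eta> (Suc j)) - V (\<xi> i, \<eta> (Suc j))) + (V (\<xi> i, \<eta> (Suc j)) - V (\<xi> i, \<eta> j))" for i j
    by simp
  have s1: "(\<Sum>i<n. \<Sum>j<n. V (\<xi> (Suc i), \<eta> (Suc j)) - V (\<xi> i, \<eta> (Suc j))) \<le> real n * K"
  proof -
    have "(\<Sum>i<n. \<Sum>j<n. V (\<xi> (Suc i), \<eta> (Suc j)) - V (\<xi> i, \<eta> (Suc j)))
        = (\<Sum>j<n. \<Sum>i<n. V (\<xi> (Suc i), \<eta> (Suc j)) - V (\<xi> i, \<eta> (Suc j)))" by (rule sum.swap)
    also have "\<dots> = (\<Sum>j<n. V (\<xi> n, \<eta> (Suc j)) - V (\<xi> 0, \<eta> (Suc j)))"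
      by (intro sum.cong refl) (rule sum_lessThan_telescope)
    also have "\<dots> \<le> (\<Sum>j<n. K)" by (intro sum_mono) (smt (verit) assms)
    finally show ?thesis by simp
  qed
  have s2: "(\<Sum>i<n. \<Sum>j<n. V (\<xi> i, \<eta> (Suc j)) - V (\<xi> i, \<eta> j)) \<le> real n * K"
  proof -
    have "(\<Sum>i<n. \<Sum>j<n. V (\<xi> i, \<eta> (Suc j)) - V (\<xi> i, \<eta> j)) = (\<Sum>i<n. V (\<xi> i, \<eta> n) - V (\<xi> i, \<eta> 0))"
      by (intro sum.cong refl) (rule sum_lessThan_telescope)
    also have "\<dots> \<le> (\<Sum>i<n. K)" by (intro sum_mono) (smt (verit) assms)
    finally show ?thesis by simp
  qed
  have "(\<Sum>i<n. \<Sum>j<n. V (\<xi> (Suc i), \<eta> (Suc j)) - V (\<xi> i, \<eta> j)) =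
     (\<Sum>i<n. \<Sum>j<n. V (\<xi> (Suc i), \<eta> (Suc j)) - V (\<xi> i, \<eta> (Suc j))) + (\<Sum>i<n. \<Sum>j<n. V (\<xi> i, \<eta> (Suc j)) - V (\<xi> i, \<eta> j))"
    by (simp only: sum.distrib[symmetric]) (intro sum.cong refl; simp)
  thus ?thesis using s1 s2 by linarith
qed

lemma grid_pointwise:
  fixes G :: "real \<times> real \<Rightarrow> real" and \<xi> \<eta> :: "nat \<Rightarrow> real" and W :: "nat \<Rightarrow> nat \<Rightarrow> real \<times> real"
  assumes Kb: "\<And>L. sorted_wrt le2 L \<Longrightarrow> var G L \<le> K"
    and W: "\<And>i j. le2 (\<xi> i, \<eta> j) (W i j)" "\<And>i j. le2 (W i j) (\<xi> (Suc i), \<eta> (Suc j))"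
  shows "(\<Sum>i<n. \<Sum>j<n. \<bar>G (W i j) - G (\<xi> i, \<eta> j)\<bar>) \<le> 2 * real n * K"
proof -
  have V1: "0 \<le> Vmaj G z" "Vmaj G z \<le> K" for z
    by (rule Vmaj_props[where G=G and K=K]; use Kb in auto)+
  have V3: "Vmaj G z + \<bar>G w - G z\<bar> \<le> Vmaj G w" if "le2 z w" for z w
    by (rule Vmaj_props(3)[where G=G and K=K]) (use Kb that in auto)
  have "\<bar>G (W i j) - G (\<xi> i, \<eta> j)\<bar> \<le> Vmaj G (\<xi> (Suc i), \<eta> (Suc j)) - Vmaj G (\<xi> i, \<eta> j)" for i j
    using V3[OF W(1)[of i j]] V3[OF W(2)[of i j]] by linarith
  hence "(\<Sum>i<n. \<Sum>j<n. \<bar>G (W i j) - G (\<xi> i, \<eta> j)\<bar>) \<le> (\<Sum>i<n. \<Sum>j<n. Vmaj G (\<xi> (Suc i), \<eta> (Suc j)) - Vmaj G (\<xi> i, \<eta> j))"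
    by (intro sum_mono) auto
  also have "\<dots> \<le> 2 * real n * K" by (rule telescope2) (use V1 in auto)
  finally show ?thesis .
qed



lemma var_cong: "(\<And>z. z \<in> set L \<Longrightarrow> h z = h' z) \<Longrightarrow> var h L = var h' L"
  by (induction L rule: induct_list012) auto

lemma clampG_chain:
  fixes f :: "real \<Rightarrow> real \<Rightarrow> real"
  assumes Kf: "\<And>L. sorted_wrt le2 L \<Longrightarrow> set L \<subseteq> {a..b} \<times> {c..d} \<Longrightarrow> var (\<lambda>z. f (fst z) (snd z)) L \<le> Kf"
    and M: "\<And>x y. x \<in> {a..b} \<Longrightarrow> y \<in> {c..d} \<Longrightarrow> \<bar>f x y\<bar> \<le> M" "M \<ge> 0"
    and ab: "0 < a" "a \<le> b" "0 < c" "c \<le> d" and PQ: "P > 0" "Q > 0"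
    and L: "sorted_wrt le2 L"
  shows "var (clampG P Q (a powr P) (b powr P) (c powr Q) (d powr Q) f) L \<le> Kf + M"
proof -
  define A where "A = a powr P"
  define B where "B = b powr P"
  define C where "C = c powr Q"
  define D where "D = d powr Q"
  define G where "G = clampG P Q A B C D f"
  have AB: "A \<le> B" "C \<le> D" unfolding A_def B_def C_def D_def using ab PQ by (auto intro!: powr_mono2)
  have A0: "A > 0" "C > 0" unfolding A_def C_def using ab by auto
  define cl where "cl z = ((max A (min (fst z) B)) powr (1/P), (max C (min (snd z) D)) powr (1/Q))" for z :: "real \<times> real"
  have clin: "cl z \<in> {a..b} \<times> {c..d}" for z
  proof -
    have "(max A (min (fst z) B)) powr (1/P) \<in> {a..b}" unfolding A_def B_def
      by (rule root_in) (use ab PQ AB A_def B_def in auto)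
    moreover have "(max C (min (snd z) D)) powr (1/Q) \<in> {c..d}" unfolding C_def D_def
      by (rule root_in) (use ab PQ AB C_def D_def in auto)
    ultimately show ?thesis unfolding cl_def by auto
  qed
  have clmono: "le2 (cl z) (cl w)" if "le2 z w" for z w
  proof -
    have "max A (min (fst z) B) \<le> max A (min (fst w) B)" "max C (min (snd z) D) \<le> max C (min (snd w) D)"
      using that by (auto simp: le2_def)
    moreover have "0 \<le> max A (min (fst z) B)" "0 \<le> max C (min (snd z) D)" using A0 by auto
    ultimately show ?thesis unfolding le2_def cl_def using PQ by (auto intro!: powr_mono2)
  qed
  define R where "R = {z. A \<le> fst z \<and> C \<le> snd z}"
  have Gin: "G z = (\<lambda>z. f (fst z) (snd z)) (cl z)" if "z \<in> R" for z
    using that unfolding R_def G_def clampG_def cl_def by auto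
  have Gout: "G z = 0" if "z \<notin> R" for z using that unfolding R_def G_def clampG_def by auto
  have Kf0: "0 \<le> Kf" using Kf[of "[]"] by simp
  have Gb: "\<bar>G z\<bar> \<le> M" for z unfolding G_def A_def B_def C_def D_def
    by (rule clampG_bound) (use M ab PQ in auto)
  have inside: "var G L \<le> Kf" if "sorted_wrt le2 L" "set L \<subseteq> R" for L
  proof -
    have "var G L = var ((\<lambda>z. f (fst z) (snd z)) \<circ> cl) L"
      by (rule var_cong) (use that Gin in auto)
    also have "\<dots> = var (\<lambda>z. f (fst z) (snd z)) (map cl L)" by (simp add: var_map)
    also have "\<dots> \<le> Kf"
    proof (rule Kf)
      show "sorted_wrt le2 (map cl L)" using that(1) by (auto simp: sorted_wrt_map intro: sorted_wrt_mono_rel[of _ le2] clmono)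
      show "set (map cl L) \<subseteq> {a..b} \<times> {c..d}" unfolding set_map image_subset_iff using clin by (intro ballI) assumption
    qed
    finally show ?thesis .
  qed
  have up: "set L \<subseteq> R" if "sorted_wrt le2 (x # L)" "x \<in> R" for x L
    using that unfolding R_def le2_def by fastforce
  have "var G L \<le> Kf + M" using L
  proof (induction L rule: induct_list012)
    case 1 thus ?case using Kf0 M by simp
  next
    case (2 x) thus ?case using Kf0 M by simp
  next
    case (3 x y zs)
    show ?case
    proof (cases "x \<in> R")
      case True
      hence "set (x # y # zs) \<subseteq> R" using up[OF 3(3)] by auto
      thus ?thesis using inside[OF 3(3)] M by linarith
    next
      case False
      hence e: "var G (x # y # zs) = \<bar>G y\<bar> + var G (y # zs)" using Gout by simp
      show ?thesis
      proof (cases "y \<in> R")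
        case True
        have "set (y # zs) \<subseteq> R" using up[of y zs] 3(3) True by auto
        hence "var G (y # zs) \<le> Kf" using inside 3(3) by auto
        thus ?thesis using e Gb[of y] by linarith
      next
        case False
        hence "var G (x # y # zs) = var G (y # zs)" using e Gout by simp
        thus ?thesis using 3(2) 3(3) by auto
      qed
    qed
  qed
  thus ?thesis unfolding G_def A_def B_def C_def D_def .
qed

lemma grid_integral:
  fixes Ps G :: "real \<times> real \<Rightarrow> real" and \<xi> \<eta> :: "nat \<Rightarrow> real" and W :: "nat \<Rightarrow> nat \<Rightarrow> real \<times> real"
  assumes Psint: "integrable lborel Ps" and Psnn: "\<And>v. Ps v \<ge> 0"
    and Gm: "G \<in> borel_measurable borel" and Gb: "\<And>z. \<bar>G z\<bar> \<le> M"
    and Kb: "\<And>L. sorted_wrt le2 L \<Longrightarrow> var G L \<le> K"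
    and W: "\<And>i j. le2 (\<xi> i, \<eta> j) (W i j)" "\<And>i j. le2 (W i j) (\<xi> (Suc i), \<eta> (Suc j))"
  shows "(\<Sum>i<n. \<Sum>j<n. \<bar>(LINT v|lborel. Ps v * G (W i j + v)) - (LINT v|lborel. Ps v * G ((\<xi> i, \<eta> j) + v))\<bar>)
     \<le> 2 * real n * K * (LINT v|lborel. Ps v)"
proof -
  have int: "integrable lborel (\<lambda>v. Ps v * G (Z + v))" for Z
  proof (rule Bochner_Integration.integrable_bound[where f="\<lambda>v. M * Ps v"])
    show "integrable lborel (\<lambda>v. M * Ps v)" using Psint by simp
    have sh: "(\<lambda>v::real\<times>real. Z + v) \<in> borel_measurable borel"
      by (intro borel_measurable_continuous_onI continuous_intros)
    have "Ps \<in> borel_measurable borel" using Psint borel_measurable_integrable by auto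
    thus "(\<lambda>v. Ps v * G (Z + v)) \<in> borel_measurable lborel"
      using borel_measurable_times[OF _ measurable_compose[OF sh Gm]] by (simp add: o_def)
    show "AE v in lborel. norm (Ps v * G (Z + v)) \<le> norm (M * Ps v)"
    proof (rule AE_I2)
      fix v
      have "\<bar>Ps v\<bar> * \<bar>G (Z + v)\<bar> \<le> \<bar>Ps v\<bar> * M" by (intro mult_left_mono Gb) auto
      moreover have "M \<ge> 0" using Gb[of 0] by linarith
      ultimately show "norm (Ps v * G (Z + v)) \<le> norm (M * Ps v)" by (simp add: abs_mult mult.commute)
    qed
  qed
  define D where "D i j v = \<bar>Ps v * G (W i j + v) - Ps v * G ((\<xi> i, \<eta> j) + v)\<bar>" for i j v
  have Dint: "integrable lborel (D i j)" for i j unfolding D_def using int by auto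
  have "\<bar>(LINT v|lborel. Ps v * G (W i j + v)) - (LINT v|lborel. Ps v * G ((\<xi> i, \<eta> j) + v))\<bar> \<le> (LINT v|lborel. D i j v)" for i j
  proof -
    have "(LINT v|lborel. Ps v * G (W i j + v)) - (LINT v|lborel. Ps v * G ((\<xi> i, \<eta> j) + v))
        = (LINT v|lborel. Ps v * G (W i j + v) - Ps v * G ((\<xi> i, \<eta> j) + v))" using int by simp
    moreover have "norm (LINT v|lborel. Ps v * G (W i j + v) - Ps v * G ((\<xi> i, \<eta> j) + v))
        \<le> (LINT v|lborel. norm (Ps v * G (W i j + v) - Ps v * G ((\<xi> i, \<eta> j) + v)))"
      by (rule integral_norm_bound)
    ultimately show ?thesis unfolding D_def by simp
  qed
  hence "(\<Sum>i<n. \<Sum>j<n. \<bar>(LINT v|lborel. Ps v * G (W i j + v)) - (LINT v|lborel. Ps v * G ((\<xi> i, \<eta> j) + v))\<bar>)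
      \<le> (\<Sum>i<n. \<Sum>j<n. (LINT v|lborel. D i j v))" by (intro sum_mono) auto
  also have "\<dots> = (LINT v|lborel. (\<Sum>i<n. \<Sum>j<n. D i j v))"
    using Dint by (simp add: integral_sum)
  also have "\<dots> \<le> (LINT v|lborel. 2 * real n * K * Ps v)"
  proof (rule integral_mono)
    show "integrable lborel (\<lambda>v. \<Sum>i<n. \<Sum>j<n. D i j v)" using Dint by auto
    show "integrable lborel (\<lambda>v. 2 * real n * K * Ps v)" using Psint by simp
    fix v :: "real \<times> real"
    have "(\<Sum>i<n. \<Sum>j<n. D i j v) = Ps v * (\<Sum>i<n. \<Sum>j<n. \<bar>G (W i j + v) - G ((\<xi> i + fst v, \<eta> j + snd v))\<bar>)"
      unfolding D_def using Psnn[of v]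
      by (simp add: sum_distrib_left abs_mult right_diff_distrib[symmetric] plus_prod_def)
    also have "\<dots> \<le> Ps v * (2 * real n * K)"
    proof (rule mult_left_mono[OF _ Psnn])
      show "(\<Sum>i<n. \<Sum>j<n. \<bar>G (W i j + v) - G ((\<xi> i + fst v, \<eta> j + snd v))\<bar>) \<le> 2 * real n * K"
        by (rule grid_pointwise[where G=G and \<xi>="\<lambda>i. \<xi> i + fst v" and \<eta>="\<lambda>j. \<eta> j + snd v" and W="\<lambda>i j. W i j + v", OF Kb])
           (use W in \<open>auto simp: le2_def\<close>)
    qed
    finally show "(\<Sum>i<n. \<Sum>j<n. D i j v) \<le> 2 * real n * K * Ps v" by (simp add: mult_ac)
  qed
  also have "\<dots> = 2 * real n * K * (LINT v|lborel. Ps v)" by simp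
  finally show ?thesis .
qed



lemma grid_in:
  fixes a b :: real and n i :: nat
  assumes "a < b" "i < n"
  shows "a \<le> a + real i * (b - a) / real n" "a + real i * (b - a) / real n \<le> b"
    "a + real (Suc i) * (b - a) / real n \<le> b"
proof -
  have n: "real n > 0" using assms by simp
  have "real i * (b - a) / real n \<ge> 0" using assms by simp
  thus "a \<le> a + real i * (b - a) / real n" by simp
  have "real (Suc i) \<le> real n" using assms by simp
  hence "real (Suc i) * (b - a) \<le> real n * (b - a)" using assms by (intro mult_right_mono) auto
  hence le: "real (Suc i) * (b - a) / real n \<le> b - a" using n by (simp add: divide_le_eq mult.commute)
  thus "a + real (Suc i) * (b - a) / real n \<le> b" by simp
  have "real i * (b - a) / real n \<le> real (Suc i) * (b - a) / real n"
    using assms n by (intro divide_right_mono mult_right_mono) auto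
  thus "a + real i * (b - a) / real n \<le> b" using le by simp
qed

lemma grid_mono:
  fixes a b :: real and n i :: nat
  assumes "a \<le> b"
  shows "a + real i * (b - a) / real n \<le> a + real (Suc i) * (b - a) / real n"
  using assms by (intro add_left_mono divide_right_mono mult_right_mono) auto

lemma osc_bound:
  fixes f :: "real \<Rightarrow> real \<Rightarrow> real"
  assumes ab: "0 < a" "a < b" "0 < c" "c < d"
    and pq: "p > -1" "q > -1" and \<alpha>\<beta>: "\<alpha> > 0" "\<beta> > 0"
    and fc: "continuous_on ({a..b} \<times> {c..d}) (\<lambda>(x, y). f x y)"
    and bv: "arzela_bv a b c d f"
  obtains C where "C \<ge> 0" and "\<And>n wx wy. (\<And>i j. i < n \<Longrightarrow> j < n \<Longrightarrow>
        a + real i * (b-a) / real n \<le> wx i j \<and> wx i j \<le> a + real (Suc i) * (b-a) / real n \<and>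
        c + real j * (d-c) / real n \<le> wy i j \<and> wy i j \<le> c + real (Suc j) * (d-c) / real n) \<Longrightarrow>
      (\<Sum>i<n. \<Sum>j<n. \<bar>katugampola_int p q a c \<alpha> \<beta> f (wx i j) (wy i j)
          - katugampola_int p q a c \<alpha> \<beta> f (a + real i * (b-a) / real n) (c + real j * (d-c) / real n)\<bar>) \<le> C * real n"
proof -
  define P where "P = p + 1"
  define Q where "Q = q + 1"
  have P: "P > 0" and Q: "Q > 0" using pq unfolding P_def Q_def by auto
  define A where "A = a powr P"
  define B where "B = b powr P"
  define C where "C = c powr Q"
  define D where "D = d powr Q"
  define G where "G = clampG P Q A B C D f"
  define Ps where "Ps = Psi \<alpha> \<beta> (A - B) (C - D)"
  define Kc where "Kc = ((p + 1) powr (1 - \<alpha>) * (q + 1) powr (1 - \<beta>) / (Gamma \<alpha> * Gamma \<beta>)) / ((p+1)*(q+1))"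
  define \<Phi> where "\<Phi> Z = (LINT v|lborel. Ps v * G (Z + v))" for Z
  define F where "F = katugampola_int p q a c \<alpha> \<beta> f"
  have AB: "A \<le> B" "C \<le> D" unfolding A_def B_def C_def D_def using ab P Q by (auto intro!: powr_mono2)
  have Frep: "F x y = Kc * \<Phi> (x powr P, y powr Q)" if "x \<in> {a..b}" "y \<in> {c..d}" for x y
    unfolding F_def Kc_def \<Phi>_def Ps_def G_def A_def B_def C_def D_def P_def Q_def
    by (rule rep[OF fc ab pq \<alpha>\<beta> that])
  obtain M where M: "\<And>s t. s \<in> {a..b} \<Longrightarrow> t \<in> {c..d} \<Longrightarrow> \<bar>f s t\<bar> \<le> M" "M \<ge> 0"
  proof -
    obtain M where "\<forall>z \<in> (\<lambda>(x, y). f x y) ` ({a..b} \<times> {c..d}). norm z \<le> M"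
      using compact_imp_bounded[OF compact_continuous_image[OF fc compact_Times[OF compact_Icc compact_Icc]]]
      by (auto simp: bounded_iff)
    hence "\<And>s t. s \<in> {a..b} \<Longrightarrow> t \<in> {c..d} \<Longrightarrow> \<bar>f s t\<bar> \<le> M" by force
    moreover have "M \<ge> 0" using calculation[of a c] ab by force
    ultimately show ?thesis using that by blast
  qed
  obtain Kf where Kf: "\<And>L. sorted_wrt le2 L \<Longrightarrow> set L \<subseteq> {a..b} \<times> {c..d} \<Longrightarrow> var (\<lambda>z. f (fst z) (snd z)) L \<le> Kf"
    using arzela_chain[OF bv] ab by auto
  have Kf0: "0 \<le> Kf" using Kf[of "[]"] by simp
  have Gchain: "var G L \<le> Kf + M" if "sorted_wrt le2 L" for L
    unfolding G_def A_def B_def C_def D_def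
    by (rule clampG_chain[OF Kf M]) (use ab P Q that in auto)
  have Gm: "G \<in> borel_measurable borel" unfolding G_def A_def B_def C_def D_def
    by (rule clampG_meas[OF fc]) (use ab P Q in auto)
  have Gb: "\<bar>G z\<bar> \<le> M" for z unfolding G_def A_def B_def C_def D_def
    by (rule clampG_bound) (use M ab P Q in auto)
  have Psint: "integrable lborel Ps" unfolding Ps_def
    by (rule Psi_integrable) (use AB \<alpha>\<beta> in auto)
  have Psnn: "Ps v \<ge> 0" for v unfolding Ps_def by (rule Psi_nn)
  define I where "I = (LINT v|lborel. Ps v)"
  have I0: "I \<ge> 0" unfolding I_def using Psnn by simp
  define Cst where "Cst = \<bar>Kc\<bar> * 2 * (Kf + M) * I"
  have Cst0: "Cst \<ge> 0" unfolding Cst_def using Kf0 M I0 by simp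
  show ?thesis
  proof (rule that[OF Cst0])
    fix n :: nat and wx wy :: "nat \<Rightarrow> nat \<Rightarrow> real"
    assume w: "\<And>i j. i < n \<Longrightarrow> j < n \<Longrightarrow>
        a + real i * (b-a) / real n \<le> wx i j \<and> wx i j \<le> a + real (Suc i) * (b-a) / real n \<and>
        c + real j * (d-c) / real n \<le> wy i j \<and> wy i j \<le> c + real (Suc j) * (d-c) / real n"
    define xg where "xg i = a + real i * (b-a) / real n" for i
    define yg where "yg j = c + real j * (d-c) / real n" for j
    define \<xi> where "\<xi> i = xg i powr P" for i
    define \<eta> where "\<eta> j = yg j powr Q" for j
    define W where "W i j = (if i < n \<and> j < n then (wx i j powr P, wy i j powr Q) else (\<xi> i, \<eta> j))" for i j
    have xg0: "xg i \<ge> a" for i unfolding xg_def using ab by simp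
    have yg0: "yg j \<ge> c" for j unfolding yg_def using ab by simp
    have xgm: "xg i \<le> xg (Suc i)" for i unfolding xg_def using grid_mono[of a b i n] ab by simp
    have ygm: "yg j \<le> yg (Suc j)" for j unfolding yg_def using grid_mono[of c d j n] ab by simp
    have W1: "le2 (\<xi> i, \<eta> j) (W i j)" for i j
    proof (cases "i < n \<and> j < n")
      case True thus ?thesis using w[of i j] xg0[of i] yg0[of j] ab P Q
        unfolding W_def le2_def \<xi>_def \<eta>_def xg_def yg_def by (auto intro!: powr_mono2)
    qed (auto simp: W_def le2_def)
    have W2: "le2 (W i j) (\<xi> (Suc i), \<eta> (Suc j))" for i j
    proof (cases "i < n \<and> j < n")
      case True
      have "a \<le> wx i j" "c \<le> wy i j" using w[of i j] True xg0[of i] yg0[of j] unfolding xg_def yg_def by auto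
      thus ?thesis using True w[of i j] ab P Q
        unfolding W_def le2_def \<xi>_def \<eta>_def xg_def yg_def by (auto intro!: powr_mono2)
    next
      case False thus ?thesis using xgm[of i] ygm[of j] xg0[of i] yg0[of j] ab P Q
        unfolding W_def le2_def \<xi>_def \<eta>_def by (auto intro!: powr_mono2)
    qed
    have est: "(\<Sum>i<n. \<Sum>j<n. \<bar>\<Phi> (W i j) - \<Phi> (\<xi> i, \<eta> j)\<bar>) \<le> 2 * real n * (Kf + M) * I"
      unfolding \<Phi>_def I_def
      by (rule grid_integral[where Ps=Ps and G=G and M=M and K="Kf+M" and \<xi>=\<xi> and \<eta>=\<eta> and W=W])
         (use Psint Psnn Gm Gb Gchain W1 W2 in auto)
    have "(\<Sum>i<n. \<Sum>j<n. \<bar>F (wx i j) (wy i j) - F (xg i) (yg j)\<bar>) = (\<Sum>i<n. \<Sum>j<n. \<bar>Kc\<bar> * \<bar>\<Phi> (W i j) - \<Phi> (\<xi> i, \<eta> j)\<bar>)"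
    proof (intro sum.cong refl)
      fix i j assume ij: "i \<in> {..<n}" "j \<in> {..<n}"
      have in1: "xg i \<in> {a..b}" "yg j \<in> {c..d}" unfolding xg_def yg_def using grid_in[of a b i n] grid_in[of c d j n] ij ab by auto
      have g1: "a \<le> a + real i * (b-a) / real n" "c \<le> c + real j * (d-c) / real n"
        "a + real (Suc i) * (b-a) / real n \<le> b" "c + real (Suc j) * (d-c) / real n \<le> d"
        using grid_in[of a b i n] grid_in[of c d j n] ij ab by auto
      have in2: "wx i j \<in> {a..b}" "wy i j \<in> {c..d}"
        using w[of i j] ij g1 by (auto simp del: of_nat_Suc)
      show "\<bar>F (wx i j) (wy i j) - F (xg i) (yg j)\<bar> = \<bar>Kc\<bar> * \<bar>\<Phi> (W i j) - \<Phi> (\<xi> i, \<eta> j)\<bar>"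
        using ij unfolding Frep[OF in1] Frep[OF in2] W_def \<xi>_def \<eta>_def
        by (simp add: abs_mult[symmetric] right_diff_distrib)
    qed
    also have "\<dots> = \<bar>Kc\<bar> * (\<Sum>i<n. \<Sum>j<n. \<bar>\<Phi> (W i j) - \<Phi> (\<xi> i, \<eta> j)\<bar>)"
      by (simp add: sum_distrib_left)
    also have "\<dots> \<le> \<bar>Kc\<bar> * (2 * real n * (Kf + M) * I)" by (rule mult_left_mono[OF est]) simp
    also have "\<dots> = Cst * real n" unfolding Cst_def by simp
    finally show "(\<Sum>i<n. \<Sum>j<n. \<bar>katugampola_int p q a c \<alpha> \<beta> f (wx i j) (wy i j)
          - katugampola_int p q a c \<alpha> \<beta> f (a + real i * (b-a) / real n) (c + real j * (d-c) / real n)\<bar>) \<le> Cst * real n"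
      unfolding F_def xg_def yg_def .
  qed
qed



lemma area_lower:
  fixes g :: "real \<Rightarrow> real \<Rightarrow> real" and U :: "nat \<Rightarrow> (real \<times> real \<times> real) set"
  assumes ab: "a \<le> b" "c \<le> d" and cov: "graph2 a b c d g \<subseteq> (\<Union>i. U i)" and bd: "\<And>i. bounded (U i)"
  shows "ennreal ((b-a)*(d-c)) \<le> (\<Sum>i. ennreal (4 * (diameter (U i))\<^sup>2))"
proof -
  define D where "D i = diameter (U i)" for i
  define p where "p i = (SOME z. z \<in> U i)" for i
  define Q where "Q i = (if U i = {} then {} else
     cbox (fst (p i) - D i, fst (snd (p i)) - D i) (fst (p i) + D i, fst (snd (p i)) + D i))" for i
  have D0: "D i \<ge> 0" for i unfolding D_def by (rule diameter_ge_0[OF bd])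
  have sub: "cbox (a, c) (b, d) \<subseteq> (\<Union>i. Q i)"
  proof
    fix z :: "real \<times> real" assume z: "z \<in> cbox (a, c) (b, d)"
    obtain x y where xy: "z = (x, y)" by (cases z)
    have "x \<in> {a..b}" "y \<in> {c..d}" using z xy by (auto simp: cbox_Pair_iff)
    hence "(x, y, g x y) \<in> graph2 a b c d g" unfolding graph2_def by blast
    then obtain i where i: "(x, y, g x y) \<in> U i" using cov by auto
    hence ne: "U i \<noteq> {}" by auto
    have pi: "p i \<in> U i" unfolding p_def using ne by (metis ex_in_conv someI)
    have "dist (x, y, g x y) (p i) \<le> D i" unfolding D_def by (rule diameter_bounded_bound[OF bd i pi])
    moreover have "\<bar>x - fst (p i)\<bar> \<le> dist (x, y, g x y) (p i)"
      using dist_fst_le[of "(x, y, g x y)" "p i"] by (simp add: dist_real_def)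
    moreover have "\<bar>y - fst (snd (p i))\<bar> \<le> dist (x, y, g x y) (p i)"
      using dist_snd_le[of "(x, y, g x y)" "p i"] dist_fst_le[of "(y, g x y)" "snd (p i)"]
      by (simp add: dist_real_def)
    ultimately have "\<bar>x - fst (p i)\<bar> \<le> D i" "\<bar>y - fst (snd (p i))\<bar> \<le> D i" by linarith+
    hence "z \<in> Q i" unfolding Q_def xy using ne by (auto simp: cbox_Pair_iff abs_le_iff)
    thus "z \<in> (\<Union>i. Q i)" by blast
  qed
  have Qm: "Q i \<in> sets lborel" for i unfolding Q_def by auto
  have Qe: "emeasure lborel (Q i) \<le> ennreal (4 * (diameter (U i))\<^sup>2)" for i
  proof (cases "U i = {}")
    case True thus ?thesis unfolding Q_def by simp
  next
    case False
    have "emeasure lborel (Q i) = ennreal ((2 * D i) * (2 * D i))"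
      unfolding Q_def using False D0[of i]
      by (simp add: emeasure_lborel_cbox_eq Basis_prod_def inner_prod_def algebra_simps)
    also have "(2 * D i) * (2 * D i) = 4 * (diameter (U i))\<^sup>2" unfolding D_def by (simp add: power2_eq_square)
    finally show ?thesis by simp
  qed
  have "ennreal ((b-a)*(d-c)) = emeasure lborel (cbox (a, c) (b, d))"
    using ab by (simp add: emeasure_lborel_cbox_eq Basis_prod_def inner_prod_def)
  also have "\<dots> \<le> emeasure lborel (\<Union>i. Q i)" using sub Qm by (intro emeasure_mono) auto
  also have "\<dots> \<le> (\<Sum>i. emeasure lborel (Q i))" using Qm by (intro emeasure_subadditive_countably) auto
  also have "\<dots> \<le> (\<Sum>i. ennreal (4 * (diameter (U i))\<^sup>2))" by (intro suminf_le Qe) auto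
  finally show ?thesis .
qed



lemma cell_exists:
  fixes a b x :: real and n :: nat
  assumes "a < b" "0 < n" "a \<le> x" "x \<le> b"
  shows "\<exists>i<n. a + real i * (b-a) / real n \<le> x \<and> x \<le> a + real (Suc i) * (b-a) / real n"
proof -
  define t where "t = (x - a) * real n / (b - a)"
  have t0: "0 \<le> t" unfolding t_def using assms by simp
  have tn: "t \<le> real n" unfolding t_def using assms by (simp add: divide_le_eq)
  have xt: "x = a + t * (b - a) / real n" unfolding t_def using assms by (simp add: field_simps)
  show ?thesis
  proof (cases "t = real n")
    case True
    have "x = b" using xt True assms by simp
    moreover have "a + real (n - 1) * (b-a) / real n \<le> b"
      using grid_in(2)[of a b "n-1" n] assms by simp
    moreover have "a + real (Suc (n - 1)) * (b-a) / real n = b" using assms by simp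
    ultimately show ?thesis using assms by (intro exI[of _ "n-1"]) auto
  next
    case False
    define i where "i = nat \<lfloor>t\<rfloor>"
    have i1: "real i \<le> t" "t < real i + 1" unfolding i_def using t0 by linarith+
    have "i < n" using i1 tn False by linarith
    moreover have "a + real i * (b-a) / real n \<le> x" unfolding xt using i1 assms
      by (intro add_left_mono divide_right_mono mult_right_mono) auto
    moreover have "x \<le> a + real (Suc i) * (b-a) / real n" unfolding xt using i1 assms
      by (intro add_left_mono divide_right_mono mult_right_mono) auto
    ultimately show ?thesis by blast
  qed
qed

lemma sum_sup_le:
  fixes S :: "'i \<Rightarrow> real set"
  assumes fin: "finite I" and ne: "\<And>i. i \<in> I \<Longrightarrow> S i \<noteq> {}" and bdd: "\<And>i. i \<in> I \<Longrightarrow> bdd_above (S i)"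
    and B: "\<And>w. (\<And>i. i \<in> I \<Longrightarrow> w i \<in> S i) \<Longrightarrow> (\<Sum>i\<in>I. w i) \<le> B"
  shows "(\<Sum>i\<in>I. Sup (S i)) \<le> B"
proof (rule field_le_epsilon)
  fix e :: real assume e: "e > 0"
  define e' where "e' = e / (real (card I) + 1)"
  have e': "e' > 0" unfolding e'_def using e by simp
  have "\<forall>i\<in>I. \<exists>s. s \<in> S i \<and> Sup (S i) - e' < s"
  proof
    fix i assume i: "i \<in> I"
    have "Sup (S i) - e' < Sup (S i)" using e' by simp
    then obtain s where "s \<in> S i" "Sup (S i) - e' < s" using less_cSupD[OF ne[OF i]] by blast
    thus "\<exists>s. s \<in> S i \<and> Sup (S i) - e' < s" by blast
  qed
  then obtain w where w: "\<And>i. i \<in> I \<Longrightarrow> w i \<in> S i \<and> Sup (S i) - e' < w i" by metis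
  have "(\<Sum>i\<in>I. Sup (S i)) \<le> (\<Sum>i\<in>I. w i + e')" using w by (intro sum_mono) (smt (verit))
  also have "\<dots> = (\<Sum>i\<in>I. w i) + real (card I) * e'" by (simp add: sum.distrib)
  also have "\<dots> \<le> B + real (card I) * e'" using B w by simp
  also have "real (card I) * e' \<le> e" unfolding e'_def using e by (simp add: field_simps)
  finally show "(\<Sum>i\<in>I. Sup (S i)) \<le> B + e" by simp
qed

lemma card_floor_range:
  fixes u v :: real
  assumes "u \<le> v"
  shows "real (card {\<lfloor>u\<rfloor>..\<lfloor>v\<rfloor>}) \<le> v - u + 2"
proof -
  have "card {\<lfloor>u\<rfloor>..\<lfloor>v\<rfloor>} = nat (\<lfloor>v\<rfloor> - \<lfloor>u\<rfloor> + 1)" by simp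
  moreover have "\<lfloor>v\<rfloor> - \<lfloor>u\<rfloor> + 1 \<ge> 0" using assms floor_mono by fastforce
  ultimately have "real (card {\<lfloor>u\<rfloor>..\<lfloor>v\<rfloor>}) = real_of_int (\<lfloor>v\<rfloor> - \<lfloor>u\<rfloor> + 1)" by simp
  also have "\<dots> \<le> v - u + 2" by linarith
  finally show ?thesis .
qed



lemma dist3_le:
  fixes x1 x2 y1 y2 z1 z2 :: real
  shows "dist (x1, y1, z1) (x2, y2, z2) \<le> \<bar>x1 - x2\<bar> + \<bar>y1 - y2\<bar> + \<bar>z1 - z2\<bar>"
proof -
  have e1: "dist (x1, y1, z1) (x2, y2, z2) = sqrt ((dist x1 x2)\<^sup>2 + (dist (y1, z1) (y2, z2))\<^sup>2)"
    by (simp add: dist_Pair_Pair)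
  have i1: "sqrt ((dist x1 x2)\<^sup>2 + (dist (y1, z1) (y2, z2))\<^sup>2) \<le> dist x1 x2 + dist (y1, z1) (y2, z2)"
    by (rule sqrt_sum_squares_le_sum) auto
  have e2: "dist (y1, z1) (y2, z2) = sqrt ((dist y1 y2)\<^sup>2 + (dist z1 z2)\<^sup>2)" by (simp add: dist_Pair_Pair)
  have i2: "sqrt ((dist y1 y2)\<^sup>2 + (dist z1 z2)\<^sup>2) \<le> dist y1 y2 + dist z1 z2"
    by (rule sqrt_sum_squares_le_sum) auto
  show ?thesis using e1 i1 e2 i2 by (simp add: dist_real_def)
qed

lemma cover_upper:
  fixes F :: "real \<Rightarrow> real \<Rightarrow> real"
  assumes ab: "a < b" "c < d" and Cst: "Cst \<ge> 0"
    and osc: "\<And>n wx wy. (\<And>i j. i < n \<Longrightarrow> j < n \<Longrightarrow>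
        a + real i * (b-a) / real n \<le> wx i j \<and> wx i j \<le> a + real (Suc i) * (b-a) / real n \<and>
        c + real j * (d-c) / real n \<le> wy i j \<and> wy i j \<le> c + real (Suc j) * (d-c) / real n) \<Longrightarrow>
      (\<Sum>i<n. \<Sum>j<n. \<bar>F (wx i j) (wy i j) - F (a + real i * (b-a) / real n) (c + real j * (d-c) / real n)\<bar>) \<le> Cst * real n"
  obtains C2 \<delta>0 where "\<delta>0 > 0" "C2 \<ge> 0"
    "\<And>\<delta>. 0 < \<delta> \<Longrightarrow> \<delta> \<le> \<delta>0 \<Longrightarrow> \<exists>\<U>. finite \<U> \<and> graph2 a b c d F \<subseteq> \<Union>\<U> \<and>
        (\<forall>U\<in>\<U>. bounded U \<and> diameter U \<le> \<delta>) \<and> real (card \<U>) \<le> C2 / \<delta>\<^sup>2"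
proof -
  define L0 where "L0 = max (b - a) (d - c)"
  have L0: "L0 > 0" "b - a \<le> L0" "d - c \<le> L0" unfolding L0_def using ab by auto
  define C2 where "C2 = 16 * L0\<^sup>2 * (2 * Cst / L0 + 2)"
  have C2: "C2 \<ge> 0" unfolding C2_def using L0 Cst by simp
  show ?thesis
  proof (rule that[OF L0(1) C2])
    fix \<delta> :: real assume \<delta>: "0 < \<delta>" "\<delta> \<le> L0"
    define n where "n = nat \<lceil>3 * L0 / \<delta>\<rceil>"
    have n_ge: "real n \<ge> 3 * L0 / \<delta>" unfolding n_def by linarith
    have L0d: "L0 / \<delta> \<ge> 1" using \<delta> by simp
    have n_pos: "n > 0" using n_ge L0d by (cases n) auto
    have n_le: "real n \<le> 4 * L0 / \<delta>"
    proof -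
      have "real n \<le> 3 * L0 / \<delta> + 1" unfolding n_def
        using L0 \<delta> by (simp add: of_nat_nat)
      also have "\<dots> \<le> 4 * L0 / \<delta>" using L0d by simp
      finally show ?thesis .
    qed
    define h where "h = L0 / real n"
    have h0: "h > 0" unfolding h_def using L0 n_pos by simp
    have h3: "3 * h \<le> \<delta>"
    proof -
      have "3 * L0 \<le> real n * \<delta>" using n_ge \<delta> by (simp add: divide_le_eq mult.commute)
      thus ?thesis unfolding h_def using n_pos by (simp add: field_simps)
    qed
    have hx: "(b - a) / real n \<le> h" "(d - c) / real n \<le> h" unfolding h_def using L0 n_pos
      by (auto intro!: divide_right_mono)
    define xg where "xg i = a + real i * (b-a) / real n" for i
    define yg where "yg j = c + real j * (d-c) / real n" for j
    have xgS: "xg (Suc i) = xg i + (b - a) / real n" for i unfolding xg_def using n_pos by (simp add: field_simps)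
    have ygS: "yg (Suc j) = yg j + (d - c) / real n" for j unfolding yg_def using n_pos by (simp add: field_simps)
    have xgm: "xg i \<le> xg (Suc i)" "yg j \<le> yg (Suc j)" for i j
      unfolding xgS ygS using ab n_pos by auto
    define F0 where "F0 ij = F (xg (fst ij)) (yg (snd ij))" for ij
    define incell where "incell ij x y \<longleftrightarrow> xg (fst ij) \<le> x \<and> x \<le> xg (Suc (fst ij)) \<and> yg (snd ij) \<le> y \<and> y \<le> yg (Suc (snd ij))" for ij x y
    define I where "I = {..<n} \<times> {..<n}"
    define S where "S ij = {\<bar>F x y - F0 ij\<bar> | x y. incell ij x y}" for ij
    have oscI: "(\<Sum>ij\<in>I. \<bar>F (X ij) (Y ij) - F0 ij\<bar>) \<le> Cst * real n" if XY: "\<And>ij. ij \<in> I \<Longrightarrow> incell ij (X ij) (Y ij)" for X Y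
    proof -
      have "(\<Sum>ij\<in>I. \<bar>F (X ij) (Y ij) - F0 ij\<bar>) = (\<Sum>i<n. \<Sum>j<n. \<bar>F (X (i,j)) (Y (i,j)) - F (xg i) (yg j)\<bar>)"
        unfolding I_def F0_def by (simp add: sum.cartesian_product split_beta)
      also have "\<dots> \<le> Cst * real n" unfolding xg_def yg_def
        by (rule osc) (use XY in \<open>auto simp: I_def incell_def xg_def yg_def\<close>)
      finally show ?thesis .
    qed
    have ne: "S ij \<noteq> {}" for ij
    proof -
      have "incell ij (xg (fst ij)) (yg (snd ij))" unfolding incell_def using xgm by auto
      thus ?thesis unfolding S_def by blast
    qed
    have Sbd: "s \<le> Cst * real n" if ij: "ij \<in> I" and s: "s \<in> S ij" for ij s
    proof -
      obtain x y where xy: "s = \<bar>F x y - F0 ij\<bar>" "incell ij x y" using s unfolding S_def by blast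
      define X where "X kl = (if kl = ij then x else xg (fst kl))" for kl
      define Y where "Y kl = (if kl = ij then y else yg (snd kl))" for kl
      have "incell kl (X kl) (Y kl)" for kl using xy xgm unfolding X_def Y_def incell_def by auto
      hence "(\<Sum>kl\<in>I. \<bar>F (X kl) (Y kl) - F0 kl\<bar>) \<le> Cst * real n" by (intro oscI)
      moreover have "(\<Sum>kl\<in>I. \<bar>F (X kl) (Y kl) - F0 kl\<bar>) = (\<Sum>kl\<in>I. if kl = ij then s else 0)"
        by (intro sum.cong refl) (auto simp: X_def Y_def F0_def xy)
      moreover have "(\<Sum>kl\<in>I. if kl = ij then s else 0) = s" using ij unfolding I_def by (simp add: sum.delta')
      ultimately show ?thesis by simp
    qed
    have bdd: "bdd_above (S ij)" if "ij \<in> I" for ij using Sbd[OF that] by (auto simp: bdd_above_def)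
    define r where "r ij = Sup (S ij)" for ij
    have rb: "\<bar>F x y - F0 ij\<bar> \<le> r ij" if "ij \<in> I" "incell ij x y" for ij x y
      unfolding r_def by (rule cSup_upper[OF _ bdd[OF that(1)]]) (use that(2) S_def in blast)
    have r0: "r ij \<ge> 0" if "ij \<in> I" for ij
      using rb[OF that, of "xg (fst ij)" "yg (snd ij)"] xgm unfolding incell_def F0_def by simp
    have sumr: "(\<Sum>ij\<in>I. r ij) \<le> Cst * real n"
      unfolding r_def
    proof (rule sum_sup_le)
      show "finite I" unfolding I_def by simp
      show "S i \<noteq> {}" for i by (rule ne)
      show "bdd_above (S i)" if "i \<in> I" for i using bdd that .
      fix w assume w: "\<And>i. i \<in> I \<Longrightarrow> w i \<in> S i"
      have "\<forall>ij\<in>I. \<exists>xy. w ij = \<bar>F (fst xy) (snd xy) - F0 ij\<bar> \<and> incell ij (fst xy) (snd xy)"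
        using w unfolding S_def by fastforce
      then obtain XY where XY: "\<And>ij. ij \<in> I \<Longrightarrow> w ij = \<bar>F (fst (XY ij)) (snd (XY ij)) - F0 ij\<bar> \<and> incell ij (fst (XY ij)) (snd (XY ij))"
        by metis
      have "(\<Sum>ij\<in>I. w ij) = (\<Sum>ij\<in>I. \<bar>F (fst (XY ij)) (snd (XY ij)) - F0 ij\<bar>)" using XY by simp
      also have "\<dots> \<le> Cst * real n" by (rule oscI) (use XY in auto)
      finally show "(\<Sum>ij\<in>I. w ij) \<le> Cst * real n" .
    qed
    define Box where "Box ij k = {xg (fst ij)..xg (Suc (fst ij))} \<times> ({yg (snd ij)..yg (Suc (snd ij))} \<times> {real_of_int k * h..(real_of_int k + 1) * h})" for ij and k :: int
    define Kset where "Kset ij = {\<lfloor>(F0 ij - r ij) / h\<rfloor>..\<lfloor>(F0 ij + r ij) / h\<rfloor>}" for ij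
    define IS where "IS = Sigma I Kset"
    define \<U> where "\<U> = (\<lambda>(ij, k). Box ij k) ` IS"
    have finIS: "finite IS" unfolding IS_def I_def Kset_def by auto
    have fin: "finite \<U>" unfolding \<U>_def using finIS by simp
    have cardIS: "real (card IS) \<le> C2 / \<delta>\<^sup>2"
    proof -
      have "card IS = (\<Sum>ij\<in>I. card (Kset ij))" unfolding IS_def
        by (rule card_SigmaI) (auto simp: I_def Kset_def)
      hence "real (card IS) = (\<Sum>ij\<in>I. real (card (Kset ij)))" by simp
      also have "\<dots> \<le> (\<Sum>ij\<in>I. 2 * r ij / h + 2)"
      proof (rule sum_mono)
        fix ij assume ij: "ij \<in> I"
        have "(F0 ij - r ij) / h \<le> (F0 ij + r ij) / h" using r0[OF ij] h0 by (intro divide_right_mono) auto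
        hence "real (card (Kset ij)) \<le> (F0 ij + r ij) / h - (F0 ij - r ij) / h + 2"
          unfolding Kset_def by (rule card_floor_range)
        also have "\<dots> = 2 * r ij / h + 2" using h0 by (simp add: field_simps)
        finally show "real (card (Kset ij)) \<le> 2 * r ij / h + 2" .
      qed
      also have "\<dots> = (2 / h) * (\<Sum>ij\<in>I. r ij) + 2 * real (card I)"
        by (simp add: sum.distrib sum_distrib_left sum_divide_distrib)
      also have "\<dots> \<le> (2 / h) * (Cst * real n) + 2 * real (card I)"
        using sumr h0 by (intro add_right_mono mult_left_mono) auto
      also have "card I = n * n" unfolding I_def by simp
      also have "(2 / h) * (Cst * real n) + 2 * real (n * n) = (real n)\<^sup>2 * (2 * Cst / L0 + 2)"
        unfolding h_def using L0 n_pos by (simp add: field_simps power2_eq_square)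
      also have "\<dots> \<le> (4 * L0 / \<delta>)\<^sup>2 * (2 * Cst / L0 + 2)"
        using n_le L0 Cst by (intro mult_right_mono power_mono) auto
      also have "\<dots> = C2 / \<delta>\<^sup>2" unfolding C2_def by (simp add: field_simps power2_eq_square)
      finally show ?thesis .
    qed
    have card: "real (card \<U>) \<le> C2 / \<delta>\<^sup>2"
    proof -
      have "card \<U> \<le> card IS" unfolding \<U>_def using finIS by (rule card_image_le)
      thus ?thesis using cardIS by linarith
    qed
    have cov: "graph2 a b c d F \<subseteq> \<Union>\<U>"
    proof
      fix z assume "z \<in> graph2 a b c d F"
      then obtain x y where z: "z = (x, y, F x y)" "x \<in> {a..b}" "y \<in> {c..d}" unfolding graph2_def by blast
      obtain i where i: "i < n" "xg i \<le> x" "x \<le> xg (Suc i)"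
        using cell_exists[of a b n x] ab n_pos z unfolding xg_def by auto
      obtain j where j: "j < n" "yg j \<le> y" "y \<le> yg (Suc j)"
        using cell_exists[of c d n y] ab n_pos z unfolding yg_def by auto
      define ij where "ij = (i, j)"
      have ijI: "ij \<in> I" unfolding ij_def I_def using i j by auto
      have inc: "incell ij x y" unfolding incell_def ij_def using i j by auto
      define k where "k = \<lfloor>F x y / h\<rfloor>"
      have rr: "F0 ij - r ij \<le> F x y" "F x y \<le> F0 ij + r ij" using rb[OF ijI inc] by auto
      have "k \<in> Kset ij" unfolding Kset_def k_def using rr h0
        by (auto intro!: floor_mono divide_right_mono)
      hence mem: "(ij, k) \<in> IS" unfolding IS_def using ijI by auto
      have k1: "real_of_int k * h \<le> F x y" "F x y \<le> (real_of_int k + 1) * h"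
      proof -
        have "real_of_int k \<le> F x y / h" "F x y / h \<le> real_of_int k + 1" unfolding k_def by linarith+
        thus "real_of_int k * h \<le> F x y" "F x y \<le> (real_of_int k + 1) * h"
          using h0 by (simp_all add: field_simps)
      qed
      have "z \<in> Box ij k" unfolding Box_def z using i j k1 by (auto simp: ij_def)
      thus "z \<in> \<Union>\<U>" unfolding \<U>_def using mem by blast
    qed
    have boxes: "bounded U \<and> diameter U \<le> \<delta>" if "U \<in> \<U>" for U
    proof -
      obtain ij k where U: "U = Box ij k" using \<open>U \<in> \<U>\<close> unfolding \<U>_def by auto
      have bU: "bounded U" unfolding U Box_def by (intro bounded_Times bounded_closed_interval)
      have "diameter U \<le> \<delta>"
      proof (rule diameter_le)
        show "U \<noteq> {} \<or> 0 \<le> \<delta>" using \<delta> by simp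
        fix p q assume p: "p \<in> U" and q: "q \<in> U"
        obtain x1 y1 z1 where p': "p = (x1, y1, z1)" by (cases p) auto
        obtain x2 y2 z2 where q': "q = (x2, y2, z2)" by (cases q) auto
        have "\<bar>x1 - x2\<bar> \<le> h" using p q hx xgS[of "fst ij"] unfolding U Box_def p' q' by auto
        moreover have "\<bar>y1 - y2\<bar> \<le> h" using p q hx ygS[of "snd ij"] unfolding U Box_def p' q' by auto
        moreover have "\<bar>z1 - z2\<bar> \<le> h" using p q h0 unfolding U Box_def p' q' by (auto simp: algebra_simps)
        ultimately have "dist p q \<le> 3 * h" using dist3_le[of x1 y1 z1 x2 y2 z2] unfolding p' q' by linarith
        thus "norm (p - q) \<le> \<delta>" using h3 by (simp add: dist_norm)
      qed
      thus ?thesis using bU by simp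
    qed
    show "\<exists>\<U>. finite \<U> \<and> graph2 a b c d F \<subseteq> \<Union>\<U> \<and> (\<forall>U\<in>\<U>. bounded U \<and> diameter U \<le> \<delta>) \<and> real (card \<U>) \<le> C2 / \<delta>\<^sup>2"
      using fin cov boxes card by blast
  qed
qed



lemma cover_number_le:
  fixes Gr :: "'a::metric_space set"
  assumes fin: "finite \<U>" and cov: "Gr \<subseteq> \<Union>\<U>" and bd: "\<forall>U\<in>\<U>. bounded U \<and> diameter U \<le> \<delta>"
  shows "cover_number \<delta> Gr \<le> card \<U>"
    and "\<exists>U. Gr \<subseteq> (\<Union>i<cover_number \<delta> Gr. U i) \<and> (\<forall>i<cover_number \<delta> Gr. bounded (U i) \<and> diameter (U i) \<le> \<delta>)"
proof -
  obtain e where e: "bij_betw e {0..<card \<U>} \<U>" using ex_bij_betw_nat_finite[OF fin] by blast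
  have img: "e ` {..<card \<U>} = \<U>" using e by (simp add: bij_betw_def lessThan_atLeast0)
  have ex: "\<exists>U. Gr \<subseteq> (\<Union>i<card \<U>. U i) \<and> (\<forall>i<card \<U>. bounded (U i) \<and> diameter (U i) \<le> \<delta>)"
  proof (intro exI[of _ e] conjI allI impI)
    show "Gr \<subseteq> (\<Union>i<card \<U>. e i)" using cov img by auto
    fix i assume "i < card \<U>"
    hence "e i \<in> \<U>" using img by auto
    thus "bounded (e i)" "diameter (e i) \<le> \<delta>" using bd by auto
  qed
  show "cover_number \<delta> Gr \<le> card \<U>" unfolding cover_number_def by (rule Least_le) (rule ex)
  show "\<exists>U. Gr \<subseteq> (\<Union>i<cover_number \<delta> Gr. U i) \<and> (\<forall>i<cover_number \<delta> Gr. bounded (U i) \<and> diameter (U i) \<le> \<delta>)"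
    unfolding cover_number_def by (rule LeastI_ex) (use ex in blast)
qed

lemma finite_cover_area:
  fixes g :: "real \<Rightarrow> real \<Rightarrow> real" and U :: "nat \<Rightarrow> (real \<times> real \<times> real) set"
  assumes ab: "a \<le> b" "c \<le> d" and cov: "graph2 a b c d g \<subseteq> (\<Union>i<N. U i)"
    and bd: "\<And>i. i < N \<Longrightarrow> bounded (U i) \<and> diameter (U i) \<le> \<delta>"
  shows "(b-a)*(d-c) \<le> 4 * real N * \<delta>\<^sup>2"
proof -
  define U' where "U' i = (if i < N then U i else {})" for i
  have cov': "graph2 a b c d g \<subseteq> (\<Union>i. U' i)" using cov unfolding U'_def by fastforce
  have bd': "bounded (U' i)" for i using bd unfolding U'_def by auto
  have "ennreal ((b-a)*(d-c)) \<le> (\<Sum>i. ennreal (4 * (diameter (U' i))\<^sup>2))"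
    by (rule area_lower[OF ab cov' bd'])
  also have "\<dots> = (\<Sum>i<N. ennreal (4 * (diameter (U' i))\<^sup>2))"
    by (rule suminf_finite) (auto simp: U'_def)
  also have "\<dots> \<le> (\<Sum>i<N. ennreal (4 * \<delta>\<^sup>2))"
  proof (intro sum_mono ennreal_leI mult_left_mono power_mono)
    fix i assume "i \<in> {..<N}"
    thus "diameter (U' i) \<le> \<delta>" "0 \<le> diameter (U' i)" using bd[of i] unfolding U'_def
      by (auto intro: diameter_ge_0)
  qed simp
  also have "\<dots> = ennreal (4 * real N * \<delta>\<^sup>2)" by (simp add: ennreal_of_nat_eq_real_of_nat[symmetric] ennreal_mult' mult_ac)
  finally show ?thesis using ab by (subst (asm) ennreal_le_iff) auto
qed



lemma hausdorff_zero_above: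
  fixes Gr :: "(real \<times> real \<times> real) set"
  assumes \<delta>0: "\<delta>0 > 0" and C2: "C2 \<ge> 0"
    and up: "\<And>\<delta>. 0 < \<delta> \<Longrightarrow> \<delta> \<le> \<delta>0 \<Longrightarrow> \<exists>\<U>. finite \<U> \<and> Gr \<subseteq> \<Union>\<U> \<and>
        (\<forall>U\<in>\<U>. bounded U \<and> diameter U \<le> \<delta>) \<and> real (card \<U>) \<le> C2 / \<delta>\<^sup>2"
    and s: "s > 2"
  shows "hausdorff_measure s Gr = 0"
proof -
  have "hausdorff_approx s \<delta> Gr \<le> 0" if \<delta>: "\<delta> > 0" for \<delta>
  proof (rule ennreal_le_epsilon)
    fix e :: real assume e: "e > 0"
    define t where "t = (e / (C2 + 1)) powr (1 / (s - 2))"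
    have t0: "t > 0" unfolding t_def using e C2 by simp
    define d where "d = min (min \<delta> \<delta>0) t"
    have d0: "d > 0" "d \<le> \<delta>" "d \<le> \<delta>0" "d \<le> t" unfolding d_def using \<delta> \<delta>0 t0 by auto
    have dt: "d powr (s - 2) \<le> e / (C2 + 1)"
    proof -
      have "d powr (s - 2) \<le> t powr (s - 2)" using d0 s by (intro powr_mono2) auto
      also have "t powr (s - 2) = e / (C2 + 1)" unfolding t_def using s e C2 by (simp add: powr_powr)
      finally show ?thesis .
    qed
    obtain \<U> where U: "finite \<U>" "Gr \<subseteq> \<Union>\<U>" "\<forall>U\<in>\<U>. bounded U \<and> diameter U \<le> d" "real (card \<U>) \<le> C2 / d\<^sup>2"
      using up[OF d0(1) d0(3)] by blast
    define N where "N = cover_number d Gr"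
    have NC: "real N \<le> C2 / d\<^sup>2" using cover_number_le(1)[OF U(1-3)] U(4) unfolding N_def by linarith
    obtain V where V: "Gr \<subseteq> (\<Union>i<N. V i)" "\<And>i. i < N \<Longrightarrow> bounded (V i) \<and> diameter (V i) \<le> d"
      using cover_number_le(2)[OF U(1-3)] unfolding N_def by blast
    define V' where "V' i = (if i < N then V i else {})" for i
    have adm: "V' \<in> {U :: nat \<Rightarrow> (real \<times> real \<times> real) set. Gr \<subseteq> (\<Union>i. U i) \<and> (\<forall>i. bounded (U i) \<and> diameter (U i) \<le> \<delta>)}"
      using V d0 unfolding V'_def by fastforce
    have "(\<Sum>i. ennreal (diameter (V' i) powr s)) = (\<Sum>i<N. ennreal (diameter (V' i) powr s))"
      by (rule suminf_finite) (auto simp: V'_def)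
    also have "\<dots> \<le> (\<Sum>i<N. ennreal (d powr s))"
    proof (intro sum_mono ennreal_leI powr_mono2)
      fix i assume "i \<in> {..<N}"
      thus "0 \<le> diameter (V' i)" "diameter (V' i) \<le> d" using V(2)[of i] unfolding V'_def
        by (auto intro: diameter_ge_0)
    qed (use s in auto)
    also have "\<dots> = ennreal (real N * d powr s)" by (simp add: ennreal_of_nat_eq_real_of_nat[symmetric] ennreal_mult')
    also have "real N * d powr s \<le> e"
    proof -
      have d2: "d powr 2 = d\<^sup>2" using d0 by (simp add: powr_numeral)
      have "d powr s = d powr (2 + (s - 2))" by simp
      also have "\<dots> = d powr 2 * d powr (s - 2)" by (rule powr_add)
      finally have ds: "d powr s = d\<^sup>2 * d powr (s - 2)" using d2 by simp
      have "real N * d powr s \<le> (C2 / d\<^sup>2) * (d\<^sup>2 * d powr (s - 2))"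
        unfolding ds using NC by (intro mult_right_mono) auto
      also have "\<dots> = C2 * d powr (s - 2)" using d0 by (simp add: field_simps)
      also have "\<dots> \<le> C2 * (e / (C2 + 1))" using dt C2 by (intro mult_left_mono) auto
      also have "\<dots> \<le> e" using C2 e by (simp add: field_simps)
      finally show ?thesis .
    qed
    hence "ennreal (real N * d powr s) \<le> ennreal e" by (rule ennreal_leI)
    finally have "(\<Sum>i. ennreal (diameter (V' i) powr s)) \<le> ennreal e" .
    hence "hausdorff_approx s \<delta> Gr \<le> ennreal e"
      unfolding hausdorff_approx_def by (rule INF_lower2[OF adm])
    thus "hausdorff_approx s \<delta> Gr \<le> 0 + ennreal e" by simp
  qed
  thus ?thesis unfolding hausdorff_measure_def by (auto intro!: antisym SUP_least)
qed

lemma hausdorff_pos_below: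
  fixes g :: "real \<Rightarrow> real \<Rightarrow> real"
  assumes ab: "a < b" "c < d" and s: "0 \<le> s" "s \<le> 2"
  shows "hausdorff_measure s (graph2 a b c d g) \<noteq> 0"
proof -
  define A where "A = (b - a) * (d - c)"
  have A0: "A > 0" unfolding A_def using ab by simp
  have low: "ennreal (A / 4) \<le> (\<Sum>i. ennreal (diameter (U i) powr s))"
    if U: "graph2 a b c d g \<subseteq> (\<Union>i. U i)" "\<And>i. bounded (U i) \<and> diameter (U i) \<le> 1" for U :: "nat \<Rightarrow> (real \<times> real \<times> real) set"
  proof -
    have "ennreal A \<le> (\<Sum>i. ennreal (4 * (diameter (U i))\<^sup>2))"
      unfolding A_def by (rule area_lower) (use ab U in auto)
    also have "\<dots> \<le> (\<Sum>i. 4 * ennreal (diameter (U i) powr s))"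
    proof (intro suminf_le allI)
      fix i
      define D where "D = diameter (U i)"
      have D: "0 \<le> D" "D \<le> 1" unfolding D_def using U(2)[of i] by (auto intro: diameter_ge_0)
      have "D\<^sup>2 \<le> D powr s"
      proof (cases "D = 0")
        case False
        hence "D\<^sup>2 = D powr 2" using D by (simp add: powr_numeral)
        also have "\<dots> \<le> D powr s" using D s by (intro powr_mono') auto
        finally show ?thesis .
      qed (use s in simp)
      hence "ennreal (4 * D\<^sup>2) \<le> ennreal (4 * D powr s)" by (intro ennreal_leI) auto
      also have "\<dots> = 4 * ennreal (D powr s)" by (simp add: ennreal_mult')
      finally show "ennreal (4 * (diameter (U i))\<^sup>2) \<le> 4 * ennreal (diameter (U i) powr s)" unfolding D_def .
    qed auto
    also have "\<dots> = 4 * (\<Sum>i. ennreal (diameter (U i) powr s))" by (rule ennreal_suminf_cmult)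
    finally have le: "ennreal A \<le> 4 * (\<Sum>i. ennreal (diameter (U i) powr s))" .
    show ?thesis
    proof (cases "(\<Sum>i. ennreal (diameter (U i) powr s))" rule: ennreal_cases)
      case (real r)
      hence "ennreal A \<le> ennreal (4 * r)" using le by (simp add: ennreal_mult')
      hence "A \<le> 4 * r" using real by (subst (asm) ennreal_le_iff) auto
      hence "ennreal (A / 4) \<le> ennreal r" by (intro ennreal_leI) auto
    thus ?thesis using real by simp
    qed simp
  qed
  have "ennreal (A / 4) \<le> hausdorff_approx s 1 (graph2 a b c d g)"
    unfolding hausdorff_approx_def by (rule INF_greatest) (use low in auto)
  also have "\<dots> \<le> hausdorff_measure s (graph2 a b c d g)"
    unfolding hausdorff_measure_def by (rule SUP_upper) auto
  finally show ?thesis using A0 by auto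
qed



lemma neg_ln_at_top: "filterlim (\<lambda>x::real. - ln x) at_top (at_right 0)"
  using ln_at_0 by (simp add: filterlim_uminus_at_bot)

lemma lim_aux: "((\<lambda>x::real. k / (- ln x) + 2) \<longlongrightarrow> 2) (at_right 0)"
proof -
  have "((\<lambda>x::real. k * inverse (- ln x)) \<longlongrightarrow> k * 0) (at_right 0)"
    by (intro tendsto_mult tendsto_const tendsto_inverse_0_at_top neg_ln_at_top)
  hence "((\<lambda>x::real. k * inverse (- ln x) + 2) \<longlongrightarrow> k * 0 + 2) (at_right 0)"
    by (intro tendsto_add tendsto_const)
  thus ?thesis by (simp add: divide_inverse)
qed

theorem mainTheorem5:
  fixes a b c d p q \<alpha> \<beta> :: real and f :: "real \<Rightarrow> real \<Rightarrow> real"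
  assumes "0 < a" "a < b" "0 < c" "c < d"
    and "p > -1" "q > -1" "\<alpha> > 0" "\<beta> > 0"
    and "continuous_on ({a..b} \<times> {c..d}) (\<lambda>(x, y). f x y)"
    and "arzela_bv a b c d f"
  shows "has_box_dim (graph2 a b c d (katugampola_int p q a c \<alpha> \<beta> f)) 2
    \<and> hausdorff_dim (graph2 a b c d (katugampola_int p q a c \<alpha> \<beta> f)) = 2"
proof -
  define F where "F = katugampola_int p q a c \<alpha> \<beta> f"
  define Gr where "Gr = graph2 a b c d F"
  obtain Cst where Cst: "Cst \<ge> 0" and osc: "\<And>n wx wy. (\<And>i j. i < n \<Longrightarrow> j < n \<Longrightarrow>
        a + real i * (b-a) / real n \<le> wx i j \<and> wx i j \<le> a + real (Suc i) * (b-a) / real n \<and>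
        c + real j * (d-c) / real n \<le> wy i j \<and> wy i j \<le> c + real (Suc j) * (d-c) / real n) \<Longrightarrow>
      (\<Sum>i<n. \<Sum>j<n. \<bar>F (wx i j) (wy i j) - F (a + real i * (b-a) / real n) (c + real j * (d-c) / real n)\<bar>) \<le> Cst * real n"
    unfolding F_def by (rule osc_bound[OF assms]) blast
  obtain C2 \<delta>0 where \<delta>0: "\<delta>0 > 0" and C2: "C2 \<ge> 0" and up: "\<And>\<delta>. 0 < \<delta> \<Longrightarrow> \<delta> \<le> \<delta>0 \<Longrightarrow> \<exists>\<U>. finite \<U> \<and> Gr \<subseteq> \<Union>\<U> \<and>
        (\<forall>U\<in>\<U>. bounded U \<and> diameter U \<le> \<delta>) \<and> real (card \<U>) \<le> C2 / \<delta>\<^sup>2"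
    unfolding Gr_def using cover_upper[OF assms(2) assms(4) Cst osc] by metis
  define A where "A = (b - a) * (d - c)"
  have A0: "A > 0" unfolding A_def using assms by simp
  have Nbounds: "A / (4 * \<delta>\<^sup>2) \<le> real (cover_number \<delta> Gr) \<and> real (cover_number \<delta> Gr) \<le> C2 / \<delta>\<^sup>2"
    if \<delta>: "0 < \<delta>" "\<delta> \<le> \<delta>0" for \<delta>
  proof -
    obtain \<U> where U: "finite \<U>" "Gr \<subseteq> \<Union>\<U>" "\<forall>U\<in>\<U>. bounded U \<and> diameter U \<le> \<delta>" "real (card \<U>) \<le> C2 / \<delta>\<^sup>2"
      using up[OF \<delta>] by blast
    have "real (cover_number \<delta> Gr) \<le> C2 / \<delta>\<^sup>2" using cover_number_le(1)[OF U(1-3)] U(4) by linarith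
    moreover obtain V where V: "Gr \<subseteq> (\<Union>i<cover_number \<delta> Gr. V i)"
        "\<forall>i<cover_number \<delta> Gr. bounded (V i) \<and> diameter (V i) \<le> \<delta>"
      using cover_number_le(2)[OF U(1-3)] by blast
    have "A \<le> 4 * real (cover_number \<delta> Gr) * \<delta>\<^sup>2"
      unfolding A_def by (rule finite_cover_area[of a b c d F]) (use assms V Gr_def in auto)
    hence "A / (4 * \<delta>\<^sup>2) \<le> real (cover_number \<delta> Gr)" using \<delta> by (simp add: divide_le_eq mult_ac)
    ultimately show ?thesis by simp
  qed
  have box: "has_box_dim Gr 2"
    unfolding has_box_dim_def
  proof (rule tendsto_sandwich[OF _ _ lim_aux[of "ln (A/4)"] lim_aux[of "ln C2"]])
    have ev: "\<forall>\<^sub>F \<delta> in at_right 0. \<delta> \<in> {0<..<min \<delta>0 1}"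
      by (rule eventually_at_right_real) (use \<delta>0 in simp)
    have key: "ln (A/4) / (- ln \<delta>) + 2 \<le> ln (real (cover_number \<delta> Gr)) / - ln \<delta> \<and>
               ln (real (cover_number \<delta> Gr)) / - ln \<delta> \<le> ln C2 / (- ln \<delta>) + 2"
      if \<delta>: "\<delta> \<in> {0<..<min \<delta>0 1}" for \<delta>
    proof -
      have d: "0 < \<delta>" "\<delta> \<le> \<delta>0" "\<delta> < 1" using \<delta> by auto
      define N where "N = real (cover_number \<delta> Gr)"
      have NB: "A / (4 * \<delta>\<^sup>2) \<le> N" "N \<le> C2 / \<delta>\<^sup>2" using Nbounds[OF d(1,2)] unfolding N_def by auto
      have pos: "A / (4 * \<delta>\<^sup>2) > 0" using A0 d by simp
      have N0: "N > 0" using NB pos by linarith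
      have C20: "C2 / \<delta>\<^sup>2 > 0" using NB N0 by linarith
      hence C2p: "C2 > 0" using d by (simp add: zero_less_divide_iff)
      define L where "L = - ln \<delta>"
      have L0: "L > 0" unfolding L_def using d by simp
      have lnd: "ln (\<delta>\<^sup>2) = - 2 * L" unfolding L_def using d by (simp add: ln_realpow)
      have "ln (A / (4 * \<delta>\<^sup>2)) \<le> ln N" using NB pos by simp
      moreover have "ln (A / (4 * \<delta>\<^sup>2)) = ln (A/4) + 2 * L"
        using A0 d lnd by (simp add: ln_div ln_mult)
      ultimately have l1: "ln (A/4) + 2 * L \<le> ln N" by simp
      have "ln N \<le> ln (C2 / \<delta>\<^sup>2)" using NB N0 by simp
      moreover have "ln (C2 / \<delta>\<^sup>2) = ln C2 + 2 * L" using C2p d lnd by (simp add: ln_div)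
      ultimately have l2: "ln N \<le> ln C2 + 2 * L" by simp
      have "ln (A/4) / L + 2 = (ln (A/4) + 2 * L) / L" using L0 by (simp add: field_simps)
      also have "\<dots> \<le> ln N / L" using l1 L0 by (intro divide_right_mono) auto
      finally have r1: "ln (A/4) / L + 2 \<le> ln N / L" .
      have "ln N / L \<le> (ln C2 + 2 * L) / L" using l2 L0 by (intro divide_right_mono) auto
      also have "\<dots> = ln C2 / L + 2" using L0 by (simp add: field_simps)
      finally have r2: "ln N / L \<le> ln C2 / L + 2" .
      show ?thesis using r1 r2 unfolding L_def N_def by simp
    qed
    show "\<forall>\<^sub>F \<delta> in at_right 0. ln (A/4) / (- ln \<delta>) + 2 \<le> ln (real (cover_number \<delta> Gr)) / - ln \<delta>"
      using ev by eventually_elim (use key in blast)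
    show "\<forall>\<^sub>F \<delta> in at_right 0. ln (real (cover_number \<delta> Gr)) / - ln \<delta> \<le> ln C2 / (- ln \<delta>) + 2"
      using ev by eventually_elim (use key in blast)
  qed
  have set: "{s. s \<ge> 0 \<and> hausdorff_measure s Gr = 0} = {2<..}"
  proof (intro set_eqI iffI)
    fix s :: real assume "s \<in> {s. s \<ge> 0 \<and> hausdorff_measure s Gr = 0}"
    hence s: "s \<ge> 0" "hausdorff_measure s Gr = 0" by auto
    show "s \<in> {2<..}"
    proof (rule ccontr)
      assume "s \<notin> {2<..}" hence "s \<le> 2" by simp
      thus False using hausdorff_pos_below[OF assms(2) assms(4) s(1)] s(2) unfolding Gr_def by blast
    qed
  next
    fix s :: real assume "s \<in> {2<..}"
    hence "s > 2" by simp
    thus "s \<in> {s. s \<ge> 0 \<and> hausdorff_measure s Gr = 0}"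
      using hausdorff_zero_above[OF \<delta>0 C2 up] by auto
  qed
  have "hausdorff_dim Gr = 2" unfolding hausdorff_dim_def set by simp
  thus ?thesis using box unfolding Gr_def F_def by simp
qed


end
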